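(* For SONATA for time-varying digraphs with step-size $\alpha\in(0,1]$ under Assumptions (A), (B'), (C), (E), for all $\nu\ge0$: $$\|d^\nu\|^2\le\frac6{\mu\,\phi_{lb}}\Big(\Big(\frac{D_{\max}}{\tilde\mu_{\min}}+1\Big)^2+\frac{4L_{\max}^2}{\tilde\mu_{\min}^2}\Big)p_\phi^\nu+\frac3{\tilde\mu_{\min}^2}\|y_{\phi,\perp}^\nu\|^2.$$
   Context: Problem (P): minimize $U=F+G$ over $\mathcal K$, $F=\frac1m\sum_{i=1}^mf_i$. (A): $\mathcal K\subseteq\mathbb R^d$ nonempty closed convex; $f_i$ twice differentiable convex on open $\mathcal O\supseteq\mathcal K$; $\mu I\preceq\nabla^2F\preceq LI$ on $\mathcal K$ ($\mu>0$, $L<\infty$); $G$ convex on $\mathcal K$; $U^\star$ optimal value. $\nabla^2f_i\preceq L_iI$ on $\mathcal K$, $L_{\max}=\max L_i$. (B'): digraphs $\mathcal G^\nu=(\{1,\dots,m\},\mathcal E^\nu)$; some integer $B>0$ makes the graph with edge set $\bigcup_{t=\nu B}^{(\nu+1)B-1}\mathcal E^t$ strongly connected for all $\nu\ge0$. (E): some $c_\ell>0$ with $c^\nu_{ii}\ge c_\ell$, $c^\nu_{ij}\ge c_\ell$ if $(j,i)\in\mathcal E^\nu$, $c^\nu_{ij}=0$ otherwise, $\mathbf1^\top C^\nu=\mathbf1^\top$. (C): $\tilde f_i:\mathcal O\times\mathcal O\to\mathbb R$ $C^2$, $\nabla\tilde f_i(x;x)=\nabla f_i(x)$, $\nabla\tilde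 f_i(\cdot;x)$ $\tilde L_i$-Lipschitz, $\tilde f_i(\cdot;x)$ $\tilde\mu_i$-strongly convex on $\mathcal K$ for $x\in\mathcal K$; constants $D_i^\ell\le D_i^u$ with $D_i^\ell I\preceq\nabla^2\tilde f_i(x;y)-\nabla^2F(x)\preceq D_i^uI$ on $\mathcal K\times\mathcal K$; $D_{\max}=\max_i\max\{|D_i^\ell|,|D_i^u|\}$, $\tilde\mu_{\min}=\min\tilde\mu_i$. Algorithm: $x_i^0\in\mathcal K$, $y_i^0=\nabla f_i(x_i^0)$, $\phi_i^0=1$; $\hat x_i^\nu=\arg\min_{x_i\in\mathcal K}\tilde f_i(x_i;x_i^\nu)+(y_i^\nu-\nabla f_i(x_i^\nu))^\top(x_i-x_i^\nu)+G(x_i)$; $d_i^\nu=\hat x_i^\nu-x_i^\nu$; $x_i^{\nu+1/2}=x_i^\nu+\alpha d_i^\nu$; $\phi_i^{\nu+1}=\sum_jc^\nu_{ij}\phi_j^\nu$; $x_i^{\nu+1}=\frac1{\phi_i^{\nu+1}}\sum_jc^\nu_{ij}\phi_j^\nu x_j^{\nu+1/2}$; $y_i^{\nu+1}=\frac1{\phi_i^{\nu+1}}\sum_jc^\nu_{ij}(\phi_j^\nu y_j^\nu+\nabla f_j(x_j^{\nu+1})-\nabla f_j(x_j^\nu))$. Notation: $d^\nu,y^\nu$ stack local vectors; $y_{\phi,\perp}^\nu=y^\nu-\mathbf1_m\otimes\frac1m\sum_i\phi_i^\nu y_i^\nu$; $p_\phi^\nu=\sum_i\phi_i^\nu(U(x_i^\nu)-U^\star)$;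 $\phi_{lb}=c_\ell^{2(m-1)B}$. *)

theory Defs
  imports "HOL-Analysis.Analysis"
begin

definition strongly_convex_on :: "'a::real_normed_vector set \<Rightarrow> real \<Rightarrow> ('a \<Rightarrow> real) \<Rightarrow> bool" where
  "strongly_convex_on S mu g \<longleftrightarrow>
     (\<forall>x\<in>S. \<forall>y\<in>S. \<forall>t::real. 0 \<le> t \<and> t \<le> 1 \<longrightarrow>
        g ((1 - t) *\<^sub>R x + t *\<^sub>R y) \<le> (1 - t) * g x + t * g y - mu / 2 * t * (1 - t) * (norm (x - y))\<^sup>2)"

definition C2_on :: "'a::euclidean_space set \<Rightarrow> ('a \<Rightarrow> real) \<Rightarrow> bool" where
  "C2_on S g \<longleftrightarrow>
     (\<exists>(g' :: 'a \<Rightarrow> 'a \<Rightarrow>\<^sub>L real) (g'' :: 'a \<Rightarrow> 'a \<Rightarrow>\<^sub>L ('a \<Rightarrow>\<^sub>L real)).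
        (\<forall>z\<in>S. (g has_derivative blinfun_apply (g' z)) (at z)
              \<and> (g' has_derivative blinfun_apply (g'' z)) (at z))
        \<and> continuous_on S g'')"

text \<open>Strong connectivity of the digraph on vertices {0..<m} with edge set E
  (an edge (j,i) goes from j to i).\<close>
definition strongly_connected_on :: "nat \<Rightarrow> (nat \<times> nat) set \<Rightarrow> bool" where
  "strongly_connected_on m E \<longleftrightarrow>
     (\<forall>i<m. \<forall>j<m. (i, j) \<in> (E \<inter> ({..<m} \<times> {..<m}))\<^sup>*)"

end

theory Submission
  imports Defs
begin
lemma hess_sym_approx:
  fixes g :: "'a::real_inner \<Rightarrow> real" and gr :: "'a \<Rightarrow> 'a"
  assumes S: "open S" "x \<in> S"
    and dg: "\<And>z. z \<in> S \<Longrightarrow> (g has_derivative (\<lambda>h. gr z \<bullet> h)) (at z)"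
    and dH: "(gr has_derivative H) (at x)"
    and eta: "\<eta> > 0"
  shows "\<exists>\<delta>>0. \<forall>t. 0 < t \<and> t < \<delta> \<longrightarrow>
     \<bar>(g (x + t *\<^sub>R u + t *\<^sub>R v) - g (x + t *\<^sub>R u) - g (x + t *\<^sub>R v) + g x) - t\<^sup>2 * (H u \<bullet> v)\<bar>
       \<le> \<eta> * t\<^sup>2 * ((norm u + 2 * norm v) * norm v)"
proof -
  have blH: "bounded_linear H" using dH by (simp add: has_derivative_at_alt)
  then interpret H: bounded_linear H .
  obtain d where d: "d > 0" "\<And>y. norm (y - x) < d \<Longrightarrow> norm (gr y - gr x - H (y - x)) \<le> \<eta> * norm (y - x)"
    using dH eta unfolding has_derivative_at_alt by blast
  obtain r where r: "r > 0" "ball x r \<subseteq> S" using S open_contains_ball by blast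
  define \<delta> where "\<delta> = min d r / (norm u + norm v + 1)"
  have den: "norm u + norm v + 1 > 0" by (smt (verit) norm_ge_zero)
  have \<delta>pos: "\<delta> > 0" using d r den unfolding \<delta>_def by (intro divide_pos_pos) auto
  have main: "\<bar>(g (x + t *\<^sub>R u + t *\<^sub>R v) - g (x + t *\<^sub>R u) - g (x + t *\<^sub>R v) + g x) - t\<^sup>2 * (H u \<bullet> v)\<bar>
       \<le> \<eta> * t\<^sup>2 * ((norm u + 2 * norm v) * norm v)" if t: "0 < t" "t < \<delta>" for t
  proof -
    have small: "norm (a *\<^sub>R u + s *\<^sub>R v) < min d r" if "0 \<le> a" "a \<le> t" "0 \<le> s" "s \<le> t" for a s
    proof -
      have "norm (a *\<^sub>R u + s *\<^sub>R v) \<le> a * norm u + s * norm v"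
        using that norm_triangle_ineq[of "a *\<^sub>R u" "s *\<^sub>R v"] by simp
      also have "\<dots> \<le> t * norm u + t * norm v" using that
        by (intro add_mono mult_right_mono) auto
      also have "\<dots> = t * (norm u + norm v)" by (simp add: distrib_left)
      also have "\<dots> \<le> \<delta> * (norm u + norm v)" using t by (intro mult_right_mono) auto
      also have "\<dots> < \<delta> * (norm u + norm v + 1)" using \<delta>pos by simp
      also have "\<dots> = min d r" unfolding \<delta>_def using den by simp
      finally show ?thesis .
    qed
    define \<phi> where "\<phi> s = g (x + t *\<^sub>R u + s *\<^sub>R v) - g (x + s *\<^sub>R v)" for s
    have inS: "x + (a *\<^sub>R u + s *\<^sub>R v) \<in> S" if "0 \<le> a" "a \<le> t" "0 \<le> s" "s \<le> t" for a s
    proof -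
      have "x + (a *\<^sub>R u + s *\<^sub>R v) \<in> ball x r" using small[OF that] norm_minus_cancel[of "a *\<^sub>R u + s *\<^sub>R v"] by (simp add: dist_norm)
      thus ?thesis using r(2) by blast
    qed
    have der: "(\<phi> has_derivative (\<lambda>h. h * ((gr (x + t *\<^sub>R u + s *\<^sub>R v) - gr (x + s *\<^sub>R v)) \<bullet> v))) (at s within {0..t})"
      if "0 \<le> s" "s \<le> t" for s
    proof -
      have S1: "x + t *\<^sub>R u + s *\<^sub>R v \<in> S" using inS[of t s] that t by (simp add: add.assoc)
      have S2: "x + s *\<^sub>R v \<in> S" using inS[of 0 s] that t by simp
      have d1: "((\<lambda>s. g (x + t *\<^sub>R u + s *\<^sub>R v)) has_derivative (\<lambda>h. gr (x + t *\<^sub>R u + s *\<^sub>R v) \<bullet> (h *\<^sub>R v))) (at s)"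
      proof -
        have "((\<lambda>s. x + t *\<^sub>R u + s *\<^sub>R v) has_derivative (\<lambda>h. h *\<^sub>R v)) (at s)"
          by (auto intro!: derivative_eq_intros)
        from has_derivative_compose[OF this dg[OF S1]] show ?thesis by simp
      qed
      have d2: "((\<lambda>s. g (x + s *\<^sub>R v)) has_derivative (\<lambda>h. gr (x + s *\<^sub>R v) \<bullet> (h *\<^sub>R v))) (at s)"
      proof -
        have "((\<lambda>s. x + s *\<^sub>R v) has_derivative (\<lambda>h. h *\<^sub>R v)) (at s)"
          by (auto intro!: derivative_eq_intros)
        from has_derivative_compose[OF this dg[OF S2]] show ?thesis by simp
      qed
      have "(\<phi> has_derivative (\<lambda>h. gr (x + t *\<^sub>R u + s *\<^sub>R v) \<bullet> (h *\<^sub>R v) - gr (x + s *\<^sub>R v) \<bullet> (h *\<^sub>R v))) (at s)"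
        unfolding \<phi>_def by (rule has_derivative_diff[OF d1 d2])
      then show ?thesis
        by (auto intro: has_derivative_at_withinI simp: algebra_simps inner_diff_left)
    qed
    obtain \<xi> where xi: "\<xi> \<in> {0<..<t}" "\<phi> t - \<phi> 0 = (t - 0) * ((gr (x + t *\<^sub>R u + \<xi> *\<^sub>R v) - gr (x + \<xi> *\<^sub>R v)) \<bullet> v)"
      using mvt_simple[OF t(1), of \<phi>, OF der] by auto
    define e1 where "e1 = gr (x + (t *\<^sub>R u + \<xi> *\<^sub>R v)) - gr x - H (t *\<^sub>R u + \<xi> *\<^sub>R v)"
    define e2 where "e2 = gr (x + \<xi> *\<^sub>R v) - gr x - H (\<xi> *\<^sub>R v)"
    have ne1: "norm e1 \<le> \<eta> * norm (t *\<^sub>R u + \<xi> *\<^sub>R v)"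
      unfolding e1_def using d(2)[of "x + (t *\<^sub>R u + \<xi> *\<^sub>R v)"] small[of t \<xi>] xi t by auto
    have ne2: "norm e2 \<le> \<eta> * norm (\<xi> *\<^sub>R v)"
      unfolding e2_def using d(2)[of "x + \<xi> *\<^sub>R v"] small[of 0 \<xi>] xi t by auto
    have n1: "norm (t *\<^sub>R u + \<xi> *\<^sub>R v) \<le> t * (norm u + norm v)"
    proof -
      have "norm (t *\<^sub>R u + \<xi> *\<^sub>R v) \<le> t * norm u + \<xi> * norm v"
        using xi t norm_triangle_ineq[of "t *\<^sub>R u" "\<xi> *\<^sub>R v"] by simp
      also have "\<dots> \<le> t * (norm u + norm v)" using xi by (simp add: distrib_left mult_right_mono)
      finally show ?thesis .
    qed
    have n2: "norm (\<xi> *\<^sub>R v) \<le> t * norm v" using xi by (simp add: mult_right_mono)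
    have eq: "gr (x + t *\<^sub>R u + \<xi> *\<^sub>R v) - gr (x + \<xi> *\<^sub>R v) = t *\<^sub>R H u + (e1 - e2)"
      unfolding e1_def e2_def by (simp add: H.add H.scaleR add.assoc)
    have "\<phi> t - \<phi> 0 = g (x + t *\<^sub>R u + t *\<^sub>R v) - g (x + t *\<^sub>R u) - g (x + t *\<^sub>R v) + g x"
      unfolding \<phi>_def by simp
    hence "(g (x + t *\<^sub>R u + t *\<^sub>R v) - g (x + t *\<^sub>R u) - g (x + t *\<^sub>R v) + g x) - t\<^sup>2 * (H u \<bullet> v)
        = t * ((e1 - e2) \<bullet> v)"
      using xi(2) unfolding eq by (simp add: inner_add_left power2_eq_square algebra_simps)
    also have "\<bar>\<dots>\<bar> \<le> t * (norm (e1 - e2) * norm v)"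
      using t by (simp add: abs_mult Cauchy_Schwarz_ineq2 mult_left_mono)
    also have "\<dots> \<le> t * ((\<eta> * (t * (norm u + norm v)) + \<eta> * (t * norm v)) * norm v)"
    proof -
      have "norm (e1 - e2) \<le> norm e1 + norm e2" by (rule norm_triangle_ineq4)
      also have "\<dots> \<le> \<eta> * (t * (norm u + norm v)) + \<eta> * (t * norm v)"
        using ne1 ne2 mult_left_mono[OF n1, of \<eta>] mult_left_mono[OF n2, of \<eta>] eta by linarith
      finally show ?thesis using t by (simp add: mult_left_mono mult_right_mono)
    qed
    also have "\<dots> = \<eta> * t\<^sup>2 * ((norm u + 2 * norm v) * norm v)"
      by (simp add: power2_eq_square algebra_simps)
    finally show ?thesis .
  qed
  show ?thesis using \<delta>pos main by blast
qed

lemma le_eps: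
  fixes a b C :: real
  assumes C: "C \<ge> 0" and h: "\<And>\<eta>. \<eta> > 0 \<Longrightarrow> a \<le> b + \<eta> * C"
  shows "a \<le> b"
proof (rule ccontr)
  assume "\<not> a \<le> b"
  hence ab: "a - b > 0" by simp
  define \<eta> where "\<eta> = (a - b) / (C + 1)"
  have "\<eta> > 0" unfolding \<eta>_def using ab C by simp
  hence "a \<le> b + \<eta> * C" by (rule h)
  moreover have "\<eta> * C < a - b"
  proof -
    have "\<eta> * C = (a - b) * (C / (C + 1))" unfolding \<eta>_def by simp
    also have "\<dots> < (a - b) * 1" using ab C by (intro mult_strict_left_mono) auto
    finally show ?thesis by simp
  qed
  ultimately show False by simp
qed

lemma hess_sym:
  fixes g :: "'a::real_inner \<Rightarrow> real" and gr :: "'a \<Rightarrow> 'a"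
  assumes S: "open S" "x \<in> S"
    and dg: "\<And>z. z \<in> S \<Longrightarrow> (g has_derivative (\<lambda>h. gr z \<bullet> h)) (at z)"
    and dH: "(gr has_derivative H) (at x)"
  shows "H u \<bullet> v = H v \<bullet> u"
proof -
  define C where "C = (norm u + 2 * norm v) * norm v + (norm v + 2 * norm u) * norm u"
  have C0: "C \<ge> 0" unfolding C_def by simp
  have key: "\<bar>H u \<bullet> v - H v \<bullet> u\<bar> \<le> 0 + \<eta> * C" if eta: "\<eta> > 0" for \<eta>
  proof -
    obtain d1 where d1: "d1 > 0" "\<And>t. 0 < t \<and> t < d1 \<Longrightarrow>
     \<bar>(g (x + t *\<^sub>R u + t *\<^sub>R v) - g (x + t *\<^sub>R u) - g (x + t *\<^sub>R v) + g x) - t\<^sup>2 * (H u \<bullet> v)\<bar>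
       \<le> \<eta> * t\<^sup>2 * ((norm u + 2 * norm v) * norm v)"
      using hess_sym_approx[OF S dg dH eta, of u v] by blast
    obtain d2 where d2: "d2 > 0" "\<And>t. 0 < t \<and> t < d2 \<Longrightarrow>
     \<bar>(g (x + t *\<^sub>R v + t *\<^sub>R u) - g (x + t *\<^sub>R v) - g (x + t *\<^sub>R u) + g x) - t\<^sup>2 * (H v \<bullet> u)\<bar>
       \<le> \<eta> * t\<^sup>2 * ((norm v + 2 * norm u) * norm u)"
      using hess_sym_approx[OF S dg dH eta, of v u] by blast
    define t where "t = min d1 d2 / 2"
    have t: "0 < t" "t < d1" "t < d2" using d1 d2 unfolding t_def by auto
    define \<Delta> where "\<Delta> = g (x + t *\<^sub>R u + t *\<^sub>R v) - g (x + t *\<^sub>R u) - g (x + t *\<^sub>R v) + g x"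
    have e1: "\<bar>\<Delta> - t\<^sup>2 * (H u \<bullet> v)\<bar> \<le> \<eta> * t\<^sup>2 * ((norm u + 2 * norm v) * norm v)"
      using d1(2)[of t] t unfolding \<Delta>_def by simp
    have e2: "\<bar>\<Delta> - t\<^sup>2 * (H v \<bullet> u)\<bar> \<le> \<eta> * t\<^sup>2 * ((norm v + 2 * norm u) * norm u)"
      using d2(2)[of t] t unfolding \<Delta>_def by (simp add: add_ac)
    have "t\<^sup>2 * \<bar>H u \<bullet> v - H v \<bullet> u\<bar> = \<bar>t\<^sup>2 * (H u \<bullet> v - H v \<bullet> u)\<bar>"
      by (simp add: abs_mult)
    also have "\<dots> = \<bar>t\<^sup>2 * (H u \<bullet> v) - t\<^sup>2 * (H v \<bullet> u)\<bar>"
      by (simp only: right_diff_distrib)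
    also have "\<dots> \<le> \<eta> * t\<^sup>2 * C" using e1 e2 unfolding C_def by (simp add: algebra_simps)
    finally have "t\<^sup>2 * \<bar>H u \<bullet> v - H v \<bullet> u\<bar> \<le> t\<^sup>2 * (\<eta> * C)" by (simp add: algebra_simps)
    thus ?thesis using t by simp
  qed
  have "\<bar>H u \<bullet> v - H v \<bullet> u\<bar> \<le> 0" by (rule le_eps[OF C0 key])
  thus ?thesis by simp
qed

lemma sym_norm_bound:
  fixes H :: "'a::real_inner \<Rightarrow> 'a"
  assumes lin: "linear H"
    and sym: "\<And>u v. H u \<bullet> v = H v \<bullet> u"
    and lo: "\<And>v. lo * (norm v)\<^sup>2 \<le> v \<bullet> H v" and hi: "\<And>v. v \<bullet> H v \<le> hi * (norm v)\<^sup>2"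
  shows "norm (H v) \<le> max \<bar>lo\<bar> \<bar>hi\<bar> * norm v"
proof -
  interpret linear H by fact
  define D where "D = max \<bar>lo\<bar> \<bar>hi\<bar>"
  have qb: "\<bar>w \<bullet> H w\<bar> \<le> D * (norm w)\<^sup>2" for w
  proof -
    have "lo * (norm w)\<^sup>2 \<ge> - D * (norm w)\<^sup>2" unfolding D_def
      by (intro mult_right_mono) auto
    moreover have "hi * (norm w)\<^sup>2 \<le> D * (norm w)\<^sup>2" unfolding D_def
      by (intro mult_right_mono) auto
    ultimately show ?thesis using lo[of w] hi[of w] by auto
  qed
  have pol: "4 * (u \<bullet> H v) = (u + v) \<bullet> H (u + v) - (u - v) \<bullet> H (u - v)" for u v
    using sym[of u v] by (simp add: add diff inner_add_left inner_add_right inner_diff_left inner_diff_right inner_commute)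
  have bil: "4 * (u \<bullet> H v) \<le> 2 * D * ((norm u)\<^sup>2 + (norm v)\<^sup>2)" for u v
  proof -
    have "4 * (u \<bullet> H v) \<le> D * (norm (u + v))\<^sup>2 + D * (norm (u - v))\<^sup>2"
      unfolding pol using qb[of "u + v"] qb[of "u - v"] by linarith
    also have "\<dots> = 2 * D * ((norm u)\<^sup>2 + (norm v)\<^sup>2)"
      by (simp add: power2_norm_eq_inner inner_add_left inner_add_right inner_diff_left inner_diff_right inner_commute algebra_simps)
    finally show ?thesis .
  qed
  show ?thesis
  proof (cases "H v = 0")
    case True thus ?thesis unfolding D_def[symmetric] using D_def by simp
  next
    case False
    hence v0: "v \<noteq> 0" using zero by auto
    define u where "u = (norm v / norm (H v)) *\<^sub>R H v"
    have nu: "norm u = norm v" using False unfolding u_def by simp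
    have "u \<bullet> H v = norm v * norm (H v)" using False unfolding u_def
      by (simp add: power2_norm_eq_inner[symmetric] power2_eq_square)
    hence "4 * (norm v * norm (H v)) \<le> 2 * D * (2 * (norm v)\<^sup>2)" using bil[of u v] nu by simp
    hence "norm v * norm (H v) \<le> norm v * (D * norm v)" by (simp add: power2_eq_square algebra_simps)
    thus ?thesis using v0 unfolding D_def by simp
  qed
qed

lemma sc_first:
  fixes g :: "'a::real_inner \<Rightarrow> real"
  assumes sc: "strongly_convex_on S \<mu> g" and a: "a \<in> S" and b: "b \<in> S"
    and der: "(g has_derivative (\<lambda>h. gr \<bullet> h)) (at a)"
  shows "g a + gr \<bullet> (b - a) + \<mu> / 2 * (norm (b - a))\<^sup>2 \<le> g b"
proof (cases "b = a")
  case True thus ?thesis by simp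
next
  case False
  define r where "r = norm (b - a)"
  have r: "r > 0" using False unfolding r_def by simp
  have key: "gr \<bullet> (b - a) \<le> g b - g a - \<mu> / 2 * r\<^sup>2 + \<eta> * (\<bar>\<mu>\<bar> / 2 * r\<^sup>2 + r)" if eta: "\<eta> > 0" for \<eta>
  proof -
    obtain d where d: "d > 0" "\<And>y. norm (y - a) < d \<Longrightarrow> norm (g y - g a - gr \<bullet> (y - a)) \<le> \<eta> * norm (y - a)"
      using der eta unfolding has_derivative_at_alt by blast
    define t where "t = min 1 (min (d / (2 * r)) \<eta>)"
    have t0: "0 < t" using d r eta unfolding t_def by auto
    have t1: "t \<le> 1" "t \<le> \<eta>" "t \<le> d / (2 * r)" unfolding t_def by auto
    have "d / (2 * r) < d / r" using d r by (simp add: field_simps)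
    hence t: "0 < t" "t \<le> 1" "t \<le> \<eta>" "t < d / r" using t0 t1 by auto
    define y where "y = (1 - t) *\<^sub>R a + t *\<^sub>R b"
    have ya: "y - a = t *\<^sub>R (b - a)" unfolding y_def by (simp add: algebra_simps)
    have ny: "norm (y - a) = t * r" unfolding ya r_def using t by simp
    have "t * r < d" using t r by (simp add: field_simps)
    hence e: "norm (g y - g a - gr \<bullet> (y - a)) \<le> \<eta> * (t * r)" using d(2)[of y] ny by simp
    have e2: "g y \<ge> g a + t * (gr \<bullet> (b - a)) - \<eta> * (t * r)"
    proof -
      have "\<bar>g y - g a - t * (gr \<bullet> (b - a))\<bar> \<le> \<eta> * (t * r)" using e unfolding ya by simp
      thus ?thesis by linarith
    qed
    have scy: "g y \<le> (1 - t) * g a + t * g b - \<mu> / 2 * t * (1 - t) * r\<^sup>2"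
      using sc a b t unfolding strongly_convex_on_def y_def r_def by (auto simp: norm_minus_commute)
    have "t * (gr \<bullet> (b - a)) \<le> t * (g b - g a - \<mu> / 2 * (1 - t) * r\<^sup>2 + \<eta> * r)"
      using e2 scy by (simp add: algebra_simps)
    hence 1: "gr \<bullet> (b - a) \<le> g b - g a - \<mu> / 2 * (1 - t) * r\<^sup>2 + \<eta> * r" using t by simp
    have "\<mu> / 2 * t * r\<^sup>2 \<le> \<eta> * (\<bar>\<mu>\<bar> / 2 * r\<^sup>2)"
    proof -
      have "\<mu> / 2 * t * r\<^sup>2 \<le> \<bar>\<mu>\<bar> / 2 * t * r\<^sup>2" using t by (intro mult_right_mono) auto
      also have "\<dots> \<le> \<bar>\<mu>\<bar> / 2 * \<eta> * r\<^sup>2" using t by (intro mult_right_mono mult_left_mono) auto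
      finally show ?thesis by (simp add: algebra_simps)
    qed
    moreover have "\<mu> / 2 * (1 - t) * r\<^sup>2 = \<mu> / 2 * r\<^sup>2 - \<mu> / 2 * t * r\<^sup>2" by (simp add: field_simps)
    moreover have "\<eta> * (\<bar>\<mu>\<bar> / 2 * r\<^sup>2 + r) = \<eta> * (\<bar>\<mu>\<bar> / 2 * r\<^sup>2) + \<eta> * r" by (simp add: algebra_simps)
    ultimately show ?thesis using 1 by linarith
  qed
  have "gr \<bullet> (b - a) \<le> g b - g a - \<mu> / 2 * r\<^sup>2"
    by (rule le_eps[OF _ key]) (use r in auto)
  thus ?thesis unfolding r_def by simp
qed

lemma convex_sc0: "convex_on S f \<Longrightarrow> strongly_convex_on S 0 f"
  unfolding strongly_convex_on_def by (auto dest: convex_onD)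

lemma deriv_nonneg_mono:
  fixes \<phi> \<phi>' :: "real \<Rightarrow> real"
  assumes d: "\<And>s. 0 \<le> s \<Longrightarrow> s \<le> 1 \<Longrightarrow> (\<phi> has_derivative (\<lambda>h. h * \<phi>' s)) (at s)"
    and nn: "\<And>s. 0 \<le> s \<Longrightarrow> s \<le> 1 \<Longrightarrow> \<phi>' s \<ge> 0"
  shows "\<phi> 0 \<le> \<phi> 1"
proof -
  have "\<exists>s\<in>{0..1}. \<phi> 1 - \<phi> 0 = (1 - 0) * \<phi>' s"
    by (rule mvt_very_simple[of 0 1 \<phi> "\<lambda>s h. h * \<phi>' s"]) (auto intro: has_derivative_at_withinI d)
  then obtain s where s: "s \<in> {0..1}" "\<phi> 1 - \<phi> 0 = (1 - 0) * \<phi>' s" by blast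
  thus ?thesis using nn[of s] by simp
qed

lemma psd_from_mono:
  fixes gr :: "'a::real_inner \<Rightarrow> 'a"
  assumes S: "open S" "z \<in> S" and dH: "(gr has_derivative H) (at z)"
    and mono: "\<And>p q. p \<in> S \<Longrightarrow> q \<in> S \<Longrightarrow> (gr p - gr q) \<bullet> (p - q) \<ge> 0"
  shows "v \<bullet> H v \<ge> 0"
proof -
  interpret H: bounded_linear H using dH by (simp add: has_derivative_at_alt)
  have key: "0 \<le> v \<bullet> H v + \<eta> * (norm v)\<^sup>2" if eta: "\<eta> > 0" for \<eta>
  proof (cases "v = 0")
    case True thus ?thesis by simp
  next
    case False
    obtain d where d: "d > 0" "\<And>y. norm (y - z) < d \<Longrightarrow> norm (gr y - gr z - H (y - z)) \<le> \<eta> * norm (y - z)"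
      using dH eta unfolding has_derivative_at_alt by blast
    obtain r where r: "r > 0" "ball z r \<subseteq> S" using S open_contains_ball by blast
    define t where "t = min d r / (2 * norm v)"
    have nv: "norm v > 0" using False by simp
    have t: "t > 0" "t * norm v < d" "t * norm v < r" using d r nv unfolding t_def by (auto simp: field_simps)
    define p where "p = z + t *\<^sub>R v"
    have pz: "p - z = t *\<^sub>R v" unfolding p_def by simp
    have np: "norm (p - z) = t * norm v" unfolding pz using t by simp
    have pS: "p \<in> S" using r t np by (auto simp: dist_norm norm_minus_commute intro!: subsetD[OF r(2)])
    define e where "e = gr p - gr z - H (p - z)"
    have ne: "norm e \<le> \<eta> * (t * norm v)" unfolding e_def using d(2)[of p] np t by simp
    have "0 \<le> (gr p - gr z) \<bullet> (p - z)" using mono[OF pS S(2)] .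
    also have "\<dots> = (t *\<^sub>R H v + e) \<bullet> (t *\<^sub>R v)" unfolding e_def pz by (simp add: H.scaleR)
    also have "\<dots> = t\<^sup>2 * (v \<bullet> H v) + t * (e \<bullet> v)" by (simp add: inner_add_right inner_commute[of v e] inner_commute[of v "H v"] power2_eq_square algebra_simps)
    also have "\<dots> \<le> t\<^sup>2 * (v \<bullet> H v) + t * (\<eta> * (t * norm v) * norm v)"
    proof -
      have "e \<bullet> v \<le> norm e * norm v" by (rule Cauchy_Schwarz_ineq2[THEN order_trans[OF abs_ge_self]])
      also have "\<dots> \<le> \<eta> * (t * norm v) * norm v" using ne by (simp add: mult_right_mono)
      finally show ?thesis using t by (simp add: mult_left_mono)
    qed
    also have "\<dots> = t\<^sup>2 * (v \<bullet> H v + \<eta> * (norm v)\<^sup>2)" by (simp add: power2_eq_square algebra_simps)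
    finally show ?thesis using t by (simp add: zero_le_mult_iff)
  qed
  show ?thesis by (rule le_eps[of "(norm v)\<^sup>2" 0 "v \<bullet> H v"]) (use key in \<open>auto simp: algebra_simps\<close>)
qed

lemma lipschitz_from_onorm:
  fixes gr :: "'a::euclidean_space \<Rightarrow> 'b::real_normed_vector"
  assumes K: "convex K" and d: "\<And>z. z \<in> K \<Longrightarrow> (gr has_derivative H z) (at z)"
    and bd: "\<And>z v. z \<in> K \<Longrightarrow> norm (H z v) \<le> B * norm v"
    and a: "a \<in> K" and b: "b \<in> K"
  shows "norm (gr a - gr b) \<le> B * norm (a - b)"
proof (rule differentiable_bound[OF K _ _ a b])
  show "(gr has_derivative H z) (at z within K)" if "z \<in> K" for z
    using d[OF that] by (rule has_derivative_at_withinI)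
  show "onorm (H z) \<le> B" if "z \<in> K" for z
    by (rule onorm_le) (rule bd[OF that])
qed

lemma seg_in: "convex K \<Longrightarrow> p \<in> K \<Longrightarrow> q \<in> K \<Longrightarrow> 0 \<le> s \<Longrightarrow> s \<le> 1 \<Longrightarrow> q + s *\<^sub>R (p - q) \<in> K"
proof -
  assume "convex K" "p \<in> K" "q \<in> K" "0 \<le> s" "s \<le> 1"
  hence "(1 - s) *\<^sub>R q + s *\<^sub>R p \<in> K" by (simp add: convexD)
  moreover have "(1 - s) *\<^sub>R q + s *\<^sub>R p = q + s *\<^sub>R (p - q)" by (simp add: algebra_simps)
  ultimately show ?thesis by simp
qed

lemma hess_sc_mono:
  fixes gF :: "'a::real_inner \<Rightarrow> 'a"
  assumes K: "convex K" and dgF: "\<And>z. z \<in> K \<Longrightarrow> (gF has_derivative HF z) (at z)"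
    and lb: "\<And>z v. z \<in> K \<Longrightarrow> \<mu> * (norm v)\<^sup>2 \<le> v \<bullet> HF z v"
    and p: "p \<in> K" and q: "q \<in> K"
  shows "\<mu> * (norm (p - q))\<^sup>2 \<le> (gF p - gF q) \<bullet> (p - q)"
proof -
  define \<psi> where "\<psi> s = gF (q + s *\<^sub>R (p - q)) \<bullet> (p - q) - s * (\<mu> * (norm (p - q))\<^sup>2)" for s
  have "\<psi> 0 \<le> \<psi> 1"
  proof (rule deriv_nonneg_mono)
    fix s :: real assume s: "0 \<le> s" "s \<le> 1"
    define z where "z = q + s *\<^sub>R (p - q)"
    have zK: "z \<in> K" unfolding z_def using seg_in[OF K p q s] .
    interpret H: bounded_linear "HF z" using dgF[OF zK] by (simp add: has_derivative_at_alt)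
    have d1: "((\<lambda>s. q + s *\<^sub>R (p - q)) has_derivative (\<lambda>h. h *\<^sub>R (p - q))) (at s)"
      by (auto intro!: derivative_eq_intros)
    have d2: "((\<lambda>s. gF (q + s *\<^sub>R (p - q))) has_derivative (\<lambda>h. HF z (h *\<^sub>R (p - q)))) (at s)"
      using has_derivative_compose[OF d1 dgF[OF zK[unfolded z_def]]] unfolding z_def by simp
    have d3: "((\<lambda>s. gF (q + s *\<^sub>R (p - q)) \<bullet> (p - q)) has_derivative (\<lambda>h. HF z (h *\<^sub>R (p - q)) \<bullet> (p - q))) (at s)"
      by (rule has_derivative_inner_left[OF d2])
    show "(\<psi> has_derivative (\<lambda>h. h * (HF z (p - q) \<bullet> (p - q) - \<mu> * (norm (p - q))\<^sup>2))) (at s)"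
    proof -
      have d4: "(\<psi> has_derivative (\<lambda>h. HF z (h *\<^sub>R (p - q)) \<bullet> (p - q) - h * (\<mu> * (norm (p - q))\<^sup>2))) (at s)"
        unfolding \<psi>_def by (rule has_derivative_diff[OF d3]) (auto intro!: derivative_eq_intros)
      have "(\<lambda>h. HF z (h *\<^sub>R (p - q)) \<bullet> (p - q) - h * (\<mu> * (norm (p - q))\<^sup>2))
          = (\<lambda>h. h * (HF z (p - q) \<bullet> (p - q) - \<mu> * (norm (p - q))\<^sup>2))"
        by (auto simp: H.scaleR right_diff_distrib)
      with d4 show ?thesis by simp
    qed
    show "0 \<le> HF z (p - q) \<bullet> (p - q) - \<mu> * (norm (p - q))\<^sup>2"
      using lb[OF zK, of "p - q"] by (simp add: inner_commute)
  qed
  thus ?thesis unfolding \<psi>_def by (simp add: inner_diff_left)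
qed

lemma hess_sc_first:
  fixes F :: "'a::real_inner \<Rightarrow> real" and gF :: "'a \<Rightarrow> 'a"
  assumes K: "convex K" and dF: "\<And>z. z \<in> K \<Longrightarrow> (F has_derivative (\<lambda>h. gF z \<bullet> h)) (at z)"
    and dgF: "\<And>z. z \<in> K \<Longrightarrow> (gF has_derivative HF z) (at z)"
    and lb: "\<And>z v. z \<in> K \<Longrightarrow> \<mu> * (norm v)\<^sup>2 \<le> v \<bullet> HF z v"
    and a: "a \<in> K" and b: "b \<in> K"
  shows "F a + gF a \<bullet> (b - a) + \<mu> / 2 * (norm (b - a))\<^sup>2 \<le> F b"
proof -
  define r where "r = norm (b - a)"
  define \<omega> where "\<omega> s = F (a + s *\<^sub>R (b - a)) - s * (gF a \<bullet> (b - a)) - \<mu> / 2 * s\<^sup>2 * r\<^sup>2" for s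
  have "\<omega> 0 \<le> \<omega> 1"
  proof (rule deriv_nonneg_mono)
    fix s :: real assume s: "0 \<le> s" "s \<le> 1"
    define z where "z = a + s *\<^sub>R (b - a)"
    have zK: "z \<in> K" unfolding z_def using seg_in[OF K b a s] .
    have d1: "((\<lambda>s. a + s *\<^sub>R (b - a)) has_derivative (\<lambda>h. h *\<^sub>R (b - a))) (at s)"
      by (auto intro!: derivative_eq_intros)
    have d2: "((\<lambda>s. F (a + s *\<^sub>R (b - a))) has_derivative (\<lambda>h. gF z \<bullet> (h *\<^sub>R (b - a)))) (at s)"
      using has_derivative_compose[OF d1 dF[OF zK[unfolded z_def]]] unfolding z_def by simp
    show "(\<omega> has_derivative (\<lambda>h. h * (gF z \<bullet> (b - a) - gF a \<bullet> (b - a) - \<mu> * s * r\<^sup>2))) (at s)"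
      unfolding \<omega>_def
      by (rule has_derivative_eq_rhs, rule has_derivative_diff[OF has_derivative_diff[OF d2]],
          auto intro!: derivative_eq_intros simp: algebra_simps power2_eq_square)
    show "0 \<le> gF z \<bullet> (b - a) - gF a \<bullet> (b - a) - \<mu> * s * r\<^sup>2"
    proof (cases "s = 0")
      case True thus ?thesis unfolding z_def by simp
    next
      case False
      hence sp: "s > 0" using s by simp
      have "\<mu> * (norm (z - a))\<^sup>2 \<le> (gF z - gF a) \<bullet> (z - a)"
        by (rule hess_sc_mono[OF K dgF lb zK a])
      moreover have za: "z - a = s *\<^sub>R (b - a)" by (simp add: z_def)
      moreover have "norm (z - a) = s * r" using s by (simp add: za r_def)
      ultimately have "\<mu> * (s * r)\<^sup>2 \<le> s * ((gF z - gF a) \<bullet> (b - a))" by simp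
      hence "s * (\<mu> * s * r\<^sup>2) \<le> s * ((gF z - gF a) \<bullet> (b - a))"
        by (simp add: power2_eq_square algebra_simps)
      hence "\<mu> * s * r\<^sup>2 \<le> (gF z - gF a) \<bullet> (b - a)" using sp by simp
      thus ?thesis by (simp add: inner_diff_left)
    qed
  qed
  thus ?thesis unfolding \<omega>_def r_def by simp
qed

locale sonata =
  fixes m :: nat
    and K Ob :: "'a::euclidean_space set"
    and f :: "nat \<Rightarrow> 'a \<Rightarrow> real" and gradf :: "nat \<Rightarrow> 'a \<Rightarrow> 'a" and Hf :: "nat \<Rightarrow> 'a \<Rightarrow> 'a \<Rightarrow> 'a"
    and G :: "'a \<Rightarrow> real"
    and mu L :: real and Li :: "nat \<Rightarrow> real"
    and ft :: "nat \<Rightarrow> 'a \<Rightarrow> 'a \<Rightarrow> real" and gradft :: "nat \<Rightarrow> 'a \<Rightarrow> 'a \<Rightarrow> 'a"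
    and Hft :: "nat \<Rightarrow> 'a \<Rightarrow> 'a \<Rightarrow> 'a \<Rightarrow> 'a"
    and Lt mut Dl Du :: "nat \<Rightarrow> real"
    and E :: "nat \<Rightarrow> (nat \<times> nat) set" and B :: nat
    and c :: "nat \<Rightarrow> nat \<Rightarrow> nat \<Rightarrow> real" and cl :: real
    and alpha :: real
    and x xhat y :: "nat \<Rightarrow> nat \<Rightarrow> 'a" and phi :: "nat \<Rightarrow> nat \<Rightarrow> real"
    and U :: "'a \<Rightarrow> real" and HF :: "'a \<Rightarrow> 'a \<Rightarrow> 'a"
  assumes U_def: "U = (\<lambda>z. (\<Sum>i<m. f i z) / real m + G z)"
    and HF_def: "HF = (\<lambda>z v. (1 / real m) *\<^sub>R (\<Sum>i<m. Hf i z v))"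
    and m_pos: "0 < m"
    \<comment> \<open>(A)\<close>
    and K_ne: "K \<noteq> {}" and K_closed: "closed K" and K_convex: "convex K"
    and O_open: "open Ob" and K_sub_O: "K \<subseteq> Ob"
    and f_grad: "\<And>i z. i < m \<Longrightarrow> z \<in> Ob \<Longrightarrow> (f i has_derivative (\<lambda>h. gradf i z \<bullet> h)) (at z)"
    and f_hess: "\<And>i z. i < m \<Longrightarrow> z \<in> Ob \<Longrightarrow> (gradf i has_derivative Hf i z) (at z)"
    and f_convex: "\<And>i. i < m \<Longrightarrow> convex_on Ob (f i)"
    and mu_pos: "0 < mu"
    and HF_bounds: "\<And>z v. z \<in> K \<Longrightarrow> mu * (norm v)\<^sup>2 \<le> v \<bullet> HF z v \<and> v \<bullet> HF z v \<le> L * (norm v)\<^sup>2"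
    and G_convex: "convex_on K G"
    and Hf_upper: "\<And>i z v. i < m \<Longrightarrow> z \<in> K \<Longrightarrow> v \<bullet> Hf i z v \<le> Li i * (norm v)\<^sup>2"
    \<comment> \<open>(B')\<close>
    and E_sub: "\<And>t. E t \<subseteq> {..<m} \<times> {..<m}"
    and B_pos: "0 < B"
    and B_conn: "\<And>n. strongly_connected_on m (\<Union>t\<in>{n * B ..< (Suc n) * B}. E t)"
    \<comment> \<open>(E)\<close>
    and cl_pos: "0 < cl"
    and c_diag: "\<And>t i. i < m \<Longrightarrow> c t i i \<ge> cl"
    and c_edge: "\<And>t i j. i < m \<Longrightarrow> j < m \<Longrightarrow> (j, i) \<in> E t \<Longrightarrow> c t i j \<ge> cl"
    and c_zero: "\<And>t i j. i < m \<Longrightarrow> j < m \<Longrightarrow> i \<noteq> j \<Longrightarrow> (j, i) \<notin> E t \<Longrightarrow> c t i j = 0"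
    and c_colstoch: "\<And>t j. j < m \<Longrightarrow> (\<Sum>i<m. c t i j) = 1"
    \<comment> \<open>(C)\<close>
    and ft_C2: "\<And>i. i < m \<Longrightarrow> C2_on (Ob \<times> Ob) (\<lambda>(u, w). ft i u w)"
    and ft_grad: "\<And>i u w. i < m \<Longrightarrow> u \<in> Ob \<Longrightarrow> w \<in> Ob \<Longrightarrow>
                    ((\<lambda>z. ft i z w) has_derivative (\<lambda>h. gradft i u w \<bullet> h)) (at u)"
    and ft_hess: "\<And>i u w. i < m \<Longrightarrow> u \<in> Ob \<Longrightarrow> w \<in> Ob \<Longrightarrow>
                    ((\<lambda>z. gradft i z w) has_derivative Hft i u w) (at u)"
    and ft_consistent: "\<And>i z. i < m \<Longrightarrow> z \<in> K \<Longrightarrow> gradft i z z = gradf i z"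
    and ft_lipschitz: "\<And>i w. i < m \<Longrightarrow> w \<in> K \<Longrightarrow> lipschitz_on (Lt i) K (\<lambda>z. gradft i z w)"
    and ft_strong: "\<And>i w. i < m \<Longrightarrow> w \<in> K \<Longrightarrow> strongly_convex_on K (mut i) (\<lambda>z. ft i z w)"
    and mut_pos: "\<And>i. i < m \<Longrightarrow> 0 < mut i"
    and D_le: "\<And>i. i < m \<Longrightarrow> Dl i \<le> Du i"
    and D_bounds: "\<And>i u w v. i < m \<Longrightarrow> u \<in> K \<Longrightarrow> w \<in> K \<Longrightarrow>
                    Dl i * (norm v)\<^sup>2 \<le> v \<bullet> (Hft i u w v - HF u v) \<and>
                    v \<bullet> (Hft i u w v - HF u v) \<le> Du i * (norm v)\<^sup>2"
    and alpha_pos: "0 < alpha" and alpha_le1: "alpha \<le> 1"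
    and x0: "\<And>i. i < m \<Longrightarrow> x 0 i \<in> K"
    and y0: "\<And>i. i < m \<Longrightarrow> y 0 i = gradf i (x 0 i)"
    and phi0: "\<And>i. i < m \<Longrightarrow> phi 0 i = 1"
    and xhat_def: "\<And>n i. i < m \<Longrightarrow> xhat n i \<in> K \<and>
        (\<forall>z\<in>K. ft i (xhat n i) (x n i) + (y n i - gradf i (x n i)) \<bullet> (xhat n i - x n i) + G (xhat n i)
              \<le> ft i z (x n i) + (y n i - gradf i (x n i)) \<bullet> (z - x n i) + G z)"
    and phi_upd: "\<And>n i. i < m \<Longrightarrow> phi (Suc n) i = (\<Sum>j<m. c n i j * phi n j)"
    and x_upd: "\<And>n i. i < m \<Longrightarrow> x (Suc n) i =
        (1 / phi (Suc n) i) *\<^sub>R (\<Sum>j<m. (c n i j * phi n j) *\<^sub>R (x n j + alpha *\<^sub>R (xhat n j - x n j)))"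
    and y_upd: "\<And>n i. i < m \<Longrightarrow> y (Suc n) i =
        (1 / phi (Suc n) i) *\<^sub>R (\<Sum>j<m. c n i j *\<^sub>R (phi n j *\<^sub>R y n j + gradf j (x (Suc n) j) - gradf j (x n j)))"

begin

lemma c_nonneg: "i < m \<Longrightarrow> j < m \<Longrightarrow> c t i j \<ge> 0"
proof -
  assume ij: "i < m" "j < m"
  show ?thesis
  proof (cases "i = j")
    case True thus ?thesis using c_diag[OF ij(1), of t] cl_pos by simp
  next
    case False
    show ?thesis
    proof (cases "(j, i) \<in> E t")
      case True thus ?thesis using c_edge[OF ij True] cl_pos by simp
    next
      case F2: False thus ?thesis using c_zero[OF ij False F2] by simp
    qed
  qed
qed

lemma cl_le1: "cl \<le> 1"
proof -
  have "c 0 0 0 \<le> (\<Sum>i<m. c 0 i 0)"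
    by (rule member_le_sum) (use m_pos c_nonneg in auto)
  thus ?thesis using c_colstoch[OF m_pos, of 0] c_diag[OF m_pos, of 0] by simp
qed

lemma phi_pos_xK: "\<forall>i<m. phi n i > 0 \<and> x n i \<in> K"
proof (induction n)
  case 0 thus ?case using phi0 x0 by simp
next
  case (Suc n)
  show ?case
  proof (intro allI impI conjI)
    fix i assume i: "i < m"
    have phinn: "0 \<le> phi n j" if "j < m" for j using Suc.IH that less_imp_le by blast
    have "c n i i * phi n i \<le> (\<Sum>j<m. c n i j * phi n j)"
      by (rule member_le_sum) (use i phinn c_nonneg in \<open>auto intro!: mult_nonneg_nonneg\<close>)
    moreover have "c n i i * phi n i > 0" using c_diag[OF i, of n] cl_pos Suc i by simp
    ultimately show pp: "phi (Suc n) i > 0" using phi_upd[OF i] by simp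
    define z where "z j = x n j + alpha *\<^sub>R (xhat n j - x n j)" for j
    have zK: "z j \<in> K" if "j < m" for j
    proof -
      have "z j = x n j + alpha *\<^sub>R (xhat n j - x n j)" by (simp add: z_def)
      thus ?thesis using seg_in[OF K_convex _ _ less_imp_le[OF alpha_pos] alpha_le1, of "xhat n j" "x n j"]
        xhat_def[OF that, of n] Suc that by simp
    qed
    have "x (Suc n) i = (\<Sum>j<m. (c n i j * phi n j / phi (Suc n) i) *\<^sub>R z j)"
      unfolding x_upd[OF i] z_def by (simp add: scaleR_sum_right)
    also have "\<dots> \<in> K"
    proof (rule convex_sum[OF _ K_convex])
      show "(\<Sum>j<m. c n i j * phi n j / phi (Suc n) i) = 1"
        using pp phi_upd[OF i] by (simp add: sum_divide_distrib[symmetric])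
      show "0 \<le> c n i j * phi n j / phi (Suc n) i" if "j \<in> {..<m}" for j
        using that pp phinn[of j] c_nonneg[OF i, of j n] by (auto intro!: divide_nonneg_pos mult_nonneg_nonneg)
    qed (use zK in auto)
    finally show "x (Suc n) i \<in> K" .
  qed
qed

lemma phi_pos: "i < m \<Longrightarrow> phi n i > 0" using phi_pos_xK by blast
lemma xK: "i < m \<Longrightarrow> x n i \<in> K" using phi_pos_xK by blast

lemma phi_sum: "(\<Sum>i<m. phi n i) = real m"
proof (induction n)
  case 0 thus ?case using phi0 by simp
next
  case (Suc n)
  have "(\<Sum>i<m. phi (Suc n) i) = (\<Sum>i<m. \<Sum>j<m. c n i j * phi n j)" using phi_upd by simp
  also have "\<dots> = (\<Sum>j<m. \<Sum>i<m. c n i j * phi n j)" by (rule sum.swap)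
  also have "\<dots> = (\<Sum>j<m. phi n j)" using c_colstoch by (simp add: sum_distrib_right[symmetric])
  finally show ?case using Suc by simp
qed

lemma tracking: "(\<Sum>i<m. phi n i *\<^sub>R y n i) = (\<Sum>i<m. gradf i (x n i))"
proof (induction n)
  case 0 thus ?case using phi0 y0 by simp
next
  case (Suc n)
  define g where "g j = phi n j *\<^sub>R y n j + gradf j (x (Suc n) j) - gradf j (x n j)" for j
  have "(\<Sum>i<m. phi (Suc n) i *\<^sub>R y (Suc n) i) = (\<Sum>i<m. \<Sum>j<m. c n i j *\<^sub>R g j)"
  proof (rule sum.cong[OF refl])
    fix i assume "i \<in> {..<m}"
    hence i: "i < m" by simp
    show "phi (Suc n) i *\<^sub>R y (Suc n) i = (\<Sum>j<m. c n i j *\<^sub>R g j)"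
      unfolding y_upd[OF i] g_def using phi_pos[OF i, of "Suc n"] by simp
  qed
  also have "\<dots> = (\<Sum>j<m. \<Sum>i<m. c n i j *\<^sub>R g j)" by (rule sum.swap)
  also have "\<dots> = (\<Sum>j<m. g j)" using c_colstoch by (simp add: scaleR_sum_left[symmetric])
  also have "\<dots> = (\<Sum>j<m. phi n j *\<^sub>R y n j) + (\<Sum>j<m. gradf j (x (Suc n) j)) - (\<Sum>j<m. gradf j (x n j))"
    unfolding g_def by (simp add: sum.distrib sum_subtractf)
  finally show ?case using Suc by simp
qed

end

lemma exit_edge:
  assumes "(a, b) \<in> R\<^sup>*" "a \<in> S" "b \<notin> S"
  shows "\<exists>p q. (p, q) \<in> R \<and> p \<in> S \<and> q \<notin> S"
  using assms by (induction rule: rtrancl_induct) auto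

context sonata begin

lemma phi_nonneg: "i < m \<Longrightarrow> phi n i \<ge> 0" using phi_pos[of i n] by simp

lemma phi_diag_step: "i < m \<Longrightarrow> phi (Suc n) i \<ge> c n i j * phi n j" if "j < m"
proof -
  assume i: "i < m"
  have "c n i j * phi n j \<le> (\<Sum>j<m. c n i j * phi n j)"
    by (rule member_le_sum) (use i that phi_nonneg c_nonneg in \<open>auto intro!: mult_nonneg_nonneg\<close>)
  thus ?thesis using phi_upd[OF i] by simp
qed

lemma phi_diag: "i < m \<Longrightarrow> phi (n + k) i \<ge> cl ^ k * phi n i"
proof (induction k)
  case 0 thus ?case by simp
next
  case (Suc k)
  have "cl ^ Suc k * phi n i = cl * (cl ^ k * phi n i)" by simp
  also have "\<dots> \<le> cl * phi (n + k) i" using Suc cl_pos by (intro mult_left_mono) auto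
  also have "\<dots> \<le> c (n + k) i i * phi (n + k) i"
    using c_diag[OF Suc.prems] phi_nonneg[OF Suc.prems] by (intro mult_right_mono) auto
  also have "\<dots> \<le> phi (Suc (n + k)) i" by (rule phi_diag_step[OF Suc.prems Suc.prems])
  finally show ?case by simp
qed

lemma phi_edge:
  assumes i: "i < m" and j: "j < m" and e: "(j, i) \<in> E t" and t: "a \<le> t" "t < a + B"
  shows "phi (a + B) i \<ge> cl ^ B * phi a j"
proof -
  have "phi t j \<ge> cl ^ (t - a) * phi a j" using phi_diag[OF j, where n=a and k="t - a"] t by simp
  have "phi (Suc t) i \<ge> cl * phi t j"
    using phi_diag_step[where i=i and j=j and n=t, OF j i] mult_right_mono[OF c_edge[OF i j e] phi_nonneg[OF j, of t]]
    by linarith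
  have "phi (Suc t + (a + B - Suc t)) i \<ge> cl ^ (a + B - Suc t) * phi (Suc t) i"
    by (rule phi_diag[OF i])
  hence 3: "phi (a + B) i \<ge> cl ^ (a + B - Suc t) * phi (Suc t) i" using t by simp
  have "cl ^ B * phi a j = cl ^ (a + B - Suc t) * (cl * (cl ^ (t - a) * phi a j))"
  proof -
    have "B = (a + B - Suc t) + 1 + (t - a)" using t by simp
    hence "cl ^ B = cl ^ ((a + B - Suc t) + 1 + (t - a))" by simp
    also have "\<dots> = cl ^ (a + B - Suc t) * cl * cl ^ (t - a)" by (simp only: power_add power_one_right)
    finally have "cl ^ B = cl ^ (a + B - Suc t) * cl * cl ^ (t - a)" .
    thus ?thesis by simp
  qed
  also have "\<dots> \<le> cl ^ (a + B - Suc t) * (cl * phi t j)"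
    using \<open>phi t j \<ge> _\<close> cl_pos by (intro mult_left_mono) auto
  also have "\<dots> \<le> cl ^ (a + B - Suc t) * phi (Suc t) i"
    using \<open>phi (Suc t) i \<ge> _\<close> cl_pos by (intro mult_left_mono) auto
  also have "\<dots> \<le> phi (a + B) i" by (rule 3)
  finally show ?thesis .
qed

lemma window_grow:
  assumes S: "S \<subseteq> {..<m}" "S \<noteq> {}" "S \<noteq> {..<m}"
    and lb: "\<And>j. j \<in> S \<Longrightarrow> phi (\<nu> * B) j \<ge> \<beta>"
  shows "\<exists>i<m. i \<notin> S \<and> phi (Suc \<nu> * B) i \<ge> cl ^ B * \<beta>"
proof -
  obtain j where j: "j \<in> S" using S by blast
  obtain i0 where i0: "i0 < m" "i0 \<notin> S" using S by blast
  define E' where "E' = (\<Union>t\<in>{\<nu> * B ..< (Suc \<nu>) * B}. E t)"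
  have jm: "j < m" using j S by blast
  have "(j, i0) \<in> (E' \<inter> ({..<m} \<times> {..<m}))\<^sup>*"
    using B_conn[of \<nu>] jm i0 unfolding strongly_connected_on_def E'_def by blast
  then obtain p q where pq: "(p, q) \<in> E' \<inter> ({..<m} \<times> {..<m})" "p \<in> S" "q \<notin> S"
    using exit_edge[OF _ j i0(2)] by blast
  then obtain t where t: "t \<in> {\<nu> * B ..< (Suc \<nu>) * B}" "(p, q) \<in> E t" unfolding E'_def by blast
  have "phi (\<nu> * B + B) q \<ge> cl ^ B * phi (\<nu> * B) p"
    by (rule phi_edge) (use pq t in auto)
  moreover have "cl ^ B * phi (\<nu> * B) p \<ge> cl ^ B * \<beta>"
    using lb[OF pq(2)] cl_pos by (intro mult_left_mono) auto
  ultimately show ?thesis using pq by (auto simp: add.commute)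
qed

lemma exists_big: "\<exists>j<m. phi n j \<ge> 1"
proof (rule ccontr)
  assume "\<not> ?thesis"
  hence "\<forall>j<m. phi n j < 1" by auto
  hence "(\<Sum>j<m. phi n j) < (\<Sum>j<m. 1)" using m_pos by (intro sum_strict_mono) auto
  thus False using phi_sum[of n] by simp
qed

lemma windows: "k + 1 \<le> m \<Longrightarrow> \<exists>S\<subseteq>{..<m}. card S \<ge> k + 1 \<and> (\<forall>i\<in>S. phi ((\<nu> + k) * B) i \<ge> cl ^ (k * B))"
proof (induction k)
  case 0
  obtain j where "j < m" "phi (\<nu> * B) j \<ge> 1" using exists_big by blast
  thus ?case by (intro exI[of _ "{j}"]) auto
next
  case (Suc k)
  then obtain S where S: "S \<subseteq> {..<m}" "card S \<ge> k + 1" "\<forall>i\<in>S. phi ((\<nu> + k) * B) i \<ge> cl ^ (k * B)" by auto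
  have keep: "phi ((\<nu> + Suc k) * B) i \<ge> cl ^ (Suc k * B)" if "i \<in> S" for i
  proof -
    have im: "i < m" using that S by blast
    have "phi ((\<nu> + k) * B + B) i \<ge> cl ^ B * phi ((\<nu> + k) * B) i" by (rule phi_diag[OF im])
    moreover have "cl ^ B * phi ((\<nu> + k) * B) i \<ge> cl ^ B * cl ^ (k * B)"
      using S(3) that cl_pos by (intro mult_left_mono) auto
    ultimately show ?thesis by (simp add: power_add algebra_simps)
  qed
  show ?case
  proof (cases "S = {..<m}")
    case True thus ?thesis using Suc.prems keep by (intro exI[of _ S]) auto
  next
    case False
    have Sne: "S \<noteq> {}" using S(2) by auto
    obtain i where i: "i < m" "i \<notin> S" "phi (Suc (\<nu> + k) * B) i \<ge> cl ^ B * cl ^ (k * B)"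
      using window_grow[OF S(1) Sne False, where \<nu>="\<nu> + k" and \<beta>="cl ^ (k * B)"] S(3) by auto
    have fin: "finite S" using S(1) finite_subset by blast
    show ?thesis
    proof (intro exI[of _ "insert i S"] conjI ballI)
      show "insert i S \<subseteq> {..<m}" using S i by auto
      show "Suc k + 1 \<le> card (insert i S)" using fin i S(2) by simp
      fix j assume "j \<in> insert i S"
      thus "phi ((\<nu> + Suc k) * B) j \<ge> cl ^ (Suc k * B)"
        using keep i(3) by (auto simp: power_add algebra_simps)
    qed
  qed
qed

lemma phi_lb: "i < m \<Longrightarrow> phi n i \<ge> cl ^ (2 * (m - 1) * B)"
proof -
  assume i: "i < m"
  show ?thesis
  proof (cases "m = 1")
    case True
    hence "i = 0" using i by simp
    thus ?thesis using phi_sum[of n] True by simp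
  next
    case False
    hence m2: "m \<ge> 2" using m_pos by simp
    show ?thesis
    proof (cases "n < (m - 1) * B")
      case True
      have "phi (0 + n) i \<ge> cl ^ n * phi 0 i" by (rule phi_diag[OF i])
      hence "phi n i \<ge> cl ^ n" using phi0[OF i] by simp
      moreover have "cl ^ (2 * (m - 1) * B) \<le> cl ^ n"
        using True cl_pos cl_le1 by (intro power_decreasing) auto
      ultimately show ?thesis by simp
    next
      case False
      define \<nu> where "\<nu> = n div B - (m - 1)"
      have nB: "n div B \<ge> m - 1" using div_le_mono[of "(m - 1) * B" n B] B_pos False by simp
      obtain S where S: "S \<subseteq> {..<m}" "card S \<ge> m - 1 + 1" "\<forall>i\<in>S. phi ((\<nu> + (m - 1)) * B) i \<ge> cl ^ ((m - 1) * B)"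
        using windows[of "m - 1" \<nu>] m2 by auto
      have "card S \<le> m" using card_mono[OF finite_lessThan S(1)] by simp
      hence "card S = card {..<m}" using S(2) m2 by simp
      hence "S = {..<m}" using card_subset_eq[OF finite_lessThan S(1)] by simp
      hence w: "phi ((n div B) * B) i \<ge> cl ^ ((m - 1) * B)" using S(3) i nB unfolding \<nu>_def by auto
      have "phi ((n div B) * B + n mod B) i \<ge> cl ^ (n mod B) * phi ((n div B) * B) i" by (rule phi_diag[OF i])
      moreover have "cl ^ (n mod B) * phi ((n div B) * B) i \<ge> cl ^ (n mod B) * cl ^ ((m - 1) * B)"
        using w cl_pos by (intro mult_left_mono) auto
      ultimately have "phi n i \<ge> cl ^ (n mod B) * cl ^ ((m - 1) * B)" by simp
      moreover have "cl ^ (2 * (m - 1) * B) \<le> cl ^ (n mod B) * cl ^ ((m - 1) * B)"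
      proof -
        have nm: "n mod B < B" using B_pos by simp
        obtain k where k: "m = Suc (Suc k)" using m2 by (metis add_2_eq_Suc le_Suc_ex)
        have "n mod B + (m - 1) * B \<le> 2 * (m - 1) * B" using nm unfolding k by simp
        hence "cl ^ (2 * (m - 1) * B) \<le> cl ^ (n mod B + (m - 1) * B)"
          using cl_pos cl_le1 by (intro power_decreasing) auto
        thus ?thesis by (simp add: power_add)
      qed
      ultimately show ?thesis by simp
    qed
  qed
qed

end

context sonata begin

definition "Fs z = (\<Sum>i<m. f i z) / real m"
definition "gF z = (1 / real m) *\<^sub>R (\<Sum>i<m. gradf i z)"
definition "Lmax = Max (Li ` {..<m})"
definition "Dmax = Max ((\<lambda>i. max \<bar>Dl i\<bar> \<bar>Du i\<bar>) ` {..<m})"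
definition "mumin = Min (mut ` {..<m})"

lemma U_eq: "U z = Fs z + G z" unfolding U_def Fs_def by simp

lemma Ob_convex: "convex Ob" using f_convex[OF m_pos] unfolding convex_on_def by simp

lemma dF: "z \<in> Ob \<Longrightarrow> (Fs has_derivative (\<lambda>h. gF z \<bullet> h)) (at z)"
proof -
  assume z: "z \<in> Ob"
  have "((\<lambda>z. \<Sum>i<m. f i z) has_derivative (\<lambda>h. \<Sum>i<m. gradf i z \<bullet> h)) (at z)"
    by (rule has_derivative_sum) (use f_grad z in auto)
  hence "((\<lambda>z. (\<Sum>i<m. f i z) / real m) has_derivative (\<lambda>h. (\<Sum>i<m. gradf i z \<bullet> h) / real m)) (at z)"
    by (rule bounded_linear.has_derivative[OF bounded_linear_divide])
  moreover have "(\<lambda>h. (\<Sum>i<m. gradf i z \<bullet> h) / real m) = (\<lambda>h. gF z \<bullet> h)"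
    unfolding gF_def by (auto simp: inner_sum_left)
  ultimately show ?thesis unfolding Fs_def by (simp add: fun_eq_iff)
qed

lemma dgF: "z \<in> Ob \<Longrightarrow> (gF has_derivative HF z) (at z)"
proof -
  assume z: "z \<in> Ob"
  have "((\<lambda>z. \<Sum>i<m. gradf i z) has_derivative (\<lambda>v. \<Sum>i<m. Hf i z v)) (at z)"
    by (rule has_derivative_sum) (use f_hess z in auto)
  hence "((\<lambda>z. (1 / real m) *\<^sub>R (\<Sum>i<m. gradf i z)) has_derivative (\<lambda>v. (1 / real m) *\<^sub>R (\<Sum>i<m. Hf i z v))) (at z)"
    by (rule has_derivative_scaleR_right)
  thus ?thesis unfolding gF_def HF_def .
qed

lemma Hf_sym: "i < m \<Longrightarrow> z \<in> Ob \<Longrightarrow> Hf i z u \<bullet> v = Hf i z v \<bullet> u"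
  by (rule hess_sym[OF O_open _ f_grad f_hess]) auto

lemma HF_sym: "z \<in> Ob \<Longrightarrow> HF z u \<bullet> v = HF z v \<bullet> u"
  by (rule hess_sym[OF O_open _ dF dgF]) auto

lemma Hft_sym: "i < m \<Longrightarrow> u \<in> Ob \<Longrightarrow> w \<in> Ob \<Longrightarrow> Hft i u w a \<bullet> b = Hft i u w b \<bullet> a"
  by (rule hess_sym[where g="\<lambda>z. ft i z w" and gr="\<lambda>z. gradft i z w", OF O_open _ ft_grad ft_hess]) auto

lemma f_first: "i < m \<Longrightarrow> a \<in> Ob \<Longrightarrow> b \<in> Ob \<Longrightarrow> f i a + gradf i a \<bullet> (b - a) \<le> f i b"
  using sc_first[OF convex_sc0[OF f_convex] _ _ f_grad, of i a b] by simp

lemma f_mono: "i < m \<Longrightarrow> p \<in> Ob \<Longrightarrow> q \<in> Ob \<Longrightarrow> (gradf i p - gradf i q) \<bullet> (p - q) \<ge> 0"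
proof -
  assume a: "i < m" "p \<in> Ob" "q \<in> Ob"
  have "f i p + gradf i p \<bullet> (q - p) \<le> f i q" "f i q + gradf i q \<bullet> (p - q) \<le> f i p"
    using f_first a by auto
  moreover have "gradf i p \<bullet> (q - p) = - (gradf i p \<bullet> (p - q))" by (simp add: inner_diff_right)
  ultimately show ?thesis by (simp add: inner_diff_left)
qed

lemma Hf_psd: "i < m \<Longrightarrow> z \<in> Ob \<Longrightarrow> v \<bullet> Hf i z v \<ge> 0"
  by (rule psd_from_mono[OF O_open _ f_hess]) (auto intro: f_mono)

lemma Li_nonneg: "i < m \<Longrightarrow> Li i \<ge> 0"
proof -
  assume i: "i < m"
  obtain z where z: "z \<in> K" using K_ne by blast
  obtain b :: 'a where b: "b \<in> Basis" using nonempty_Basis by blast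
  have "0 \<le> b \<bullet> Hf i z b" using Hf_psd[OF i] z K_sub_O by blast
  also have "\<dots> \<le> Li i * (norm b)\<^sup>2" using Hf_upper[OF i z] .
  finally show ?thesis using b by simp
qed

lemma Hf_norm: "i < m \<Longrightarrow> z \<in> K \<Longrightarrow> norm (Hf i z v) \<le> Li i * norm v"
proof -
  assume i: "i < m" and z: "z \<in> K"
  have zO: "z \<in> Ob" using z K_sub_O by blast
  have lin: "linear (Hf i z)" using f_hess[OF i zO] by (simp add: has_derivative_at_alt bounded_linear.linear)
  have "norm (Hf i z v) \<le> max \<bar>0\<bar> \<bar>Li i\<bar> * norm v"
    by (rule sym_norm_bound[OF lin]) (use Hf_sym[OF i zO] Hf_psd[OF i zO] Hf_upper[OF i z] in auto)
  thus ?thesis using Li_nonneg[OF i] by simp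
qed

lemma Li_le: "i < m \<Longrightarrow> Li i \<le> Lmax" unfolding Lmax_def by (rule Max_ge) auto

lemma Lmax_nonneg: "Lmax \<ge> 0" using Li_le[OF m_pos] Li_nonneg[OF m_pos] by simp

lemma gradf_lip: "i < m \<Longrightarrow> a \<in> K \<Longrightarrow> b \<in> K \<Longrightarrow> norm (gradf i a - gradf i b) \<le> Lmax * norm (a - b)"
proof -
  assume i: "i < m" and a: "a \<in> K" and b: "b \<in> K"
  have "norm (gradf i a - gradf i b) \<le> Li i * norm (a - b)"
    by (rule lipschitz_from_onorm[OF K_convex _ _ a b]) (use f_hess[OF i] K_sub_O Hf_norm[OF i] in auto)
  also have "\<dots> \<le> Lmax * norm (a - b)" using Li_le[OF i] by (simp add: mult_right_mono)
  finally show ?thesis .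
qed

lemma gF_lip: "a \<in> K \<Longrightarrow> b \<in> K \<Longrightarrow> norm (gF a - gF b) \<le> Lmax * norm (a - b)"
proof -
  assume a: "a \<in> K" and b: "b \<in> K"
  have "gF a - gF b = (1 / real m) *\<^sub>R (\<Sum>i<m. gradf i a - gradf i b)"
    unfolding gF_def by (simp add: sum_subtractf scaleR_diff_right)
  hence "norm (gF a - gF b) = (1 / real m) * norm (\<Sum>i<m. gradf i a - gradf i b)" by simp
  also have "\<dots> \<le> (1 / real m) * (\<Sum>i<m. norm (gradf i a - gradf i b))"
    by (intro mult_left_mono norm_sum) auto
  also have "\<dots> \<le> (1 / real m) * (\<Sum>i<m. Lmax * norm (a - b))"
    by (intro mult_left_mono sum_mono gradf_lip a b) auto
  also have "\<dots> = Lmax * norm (a - b)" using m_pos by simp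
  finally show ?thesis .
qed

lemma Dmax_ge: "i < m \<Longrightarrow> max \<bar>Dl i\<bar> \<bar>Du i\<bar> \<le> Dmax" unfolding Dmax_def by (rule Max_ge) auto

lemma h_lip:
  assumes i: "i < m" and w: "w \<in> K" and a: "a \<in> K" and b: "b \<in> K"
  shows "norm ((gradft i a w - gF a) - (gradft i b w - gF b)) \<le> Dmax * norm (a - b)"
proof -
  have bd: "norm (Hft i z w v - HF z v) \<le> Dmax * norm v" if z: "z \<in> K" for z v
  proof -
    have zO: "z \<in> Ob" using z K_sub_O by blast
    have wO: "w \<in> Ob" using w K_sub_O by blast
    have l1: "bounded_linear (Hft i z w)" using ft_hess[OF i zO wO] by (simp add: has_derivative_at_alt)
    have l2: "bounded_linear (HF z)" using dgF[OF zO] by (simp add: has_derivative_at_alt)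
    have lin: "linear (\<lambda>v. Hft i z w v - HF z v)"
      using l1 l2 by (intro linear_compose_sub bounded_linear.linear) auto
    have "norm (Hft i z w v - HF z v) \<le> max \<bar>Dl i\<bar> \<bar>Du i\<bar> * norm v"
    proof (rule sym_norm_bound[OF lin])
      show "(Hft i z w u - HF z u) \<bullet> v' = (Hft i z w v' - HF z v') \<bullet> u" for u v'
        using Hft_sym[OF i zO wO, of u v'] HF_sym[OF zO, of u v'] by (simp add: inner_diff_left)
    qed (use D_bounds[OF i z w] in auto)
    also have "\<dots> \<le> Dmax * norm v" using Dmax_ge[OF i] by (simp add: mult_right_mono)
    finally show ?thesis .
  qed
  show ?thesis
  proof (rule lipschitz_from_onorm[OF K_convex _ bd a b])
    fix z assume z: "z \<in> K"
    have zO: "z \<in> Ob" using z K_sub_O by blast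
    have wO: "w \<in> Ob" using w K_sub_O by blast
    show "((\<lambda>z. gradft i z w - gF z) has_derivative (\<lambda>v. Hft i z w v - HF z v)) (at z)"
      by (rule has_derivative_diff[OF ft_hess[OF i zO wO] dgF[OF zO]])
  qed
qed

lemma F_first: "a \<in> K \<Longrightarrow> b \<in> K \<Longrightarrow> Fs a + gF a \<bullet> (b - a) + mu / 2 * (norm (b - a))\<^sup>2 \<le> Fs b"
  by (rule hess_sc_first[OF K_convex _ _ _, where HF=HF]) (use dF dgF K_sub_O HF_bounds in auto)

lemma ft_first: "i < m \<Longrightarrow> w \<in> K \<Longrightarrow> a \<in> K \<Longrightarrow> b \<in> K \<Longrightarrow>
   ft i a w + gradft i a w \<bullet> (b - a) + mut i / 2 * (norm (b - a))\<^sup>2 \<le> ft i b w"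
  by (rule sc_first[OF ft_strong]) (use ft_grad K_sub_O in auto)

end

context sonata begin

definition "Ustar = Inf (U ` K)"

lemma quad_lb: "0 < (a::real) \<Longrightarrow> a / 2 * r\<^sup>2 - b * r \<ge> - b\<^sup>2 / (2 * a)"
proof -
  assume a: "0 < a"
  have "0 \<le> (a * r - b)\<^sup>2" by simp
  hence "0 \<le> a\<^sup>2 * r\<^sup>2 - 2 * a * b * r + b\<^sup>2" by (simp add: power2_eq_square algebra_simps)
  hence "- b\<^sup>2 \<le> 2 * a * (a / 2 * r\<^sup>2 - b * r)" by (simp add: power2_eq_square algebra_simps)
  thus ?thesis using a by (simp add: field_simps)
qed

lemma bdd: "bdd_below (U ` K)"
proof -
  define x00 where "x00 = x 0 0"
  define h0 where "h0 = xhat 0 0"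
  define cv where "cv = y 0 0 - gradf 0 x00"
  define a0 where "a0 z = ft 0 z x00 + cv \<bullet> (z - x00)" for z
  have x00K: "x00 \<in> K" unfolding x00_def using xK[OF m_pos] .
  have h0K: "h0 \<in> K" and h0min: "\<And>z. z \<in> K \<Longrightarrow> a0 h0 + G h0 \<le> a0 z + G z"
    using xhat_def[OF m_pos, of 0] unfolding h0_def a0_def cv_def x00_def by auto
  define C0 where "C0 = norm (gradft 0 h0 x00) + Lt 0 + norm cv"
  have Lt0: "Lt 0 \<ge> 0" using ft_lipschitz[OF m_pos x00K] unfolding lipschitz_on_def by simp
  have C0: "C0 \<ge> 0" unfolding C0_def using Lt0 by simp
  have near: "G w \<ge> G h0 - C0" if w: "w \<in> K" "norm (w - h0) \<le> 1" for w
  proof -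
    have "ft 0 w x00 + gradft 0 w x00 \<bullet> (h0 - w) + mut 0 / 2 * (norm (h0 - w))\<^sup>2 \<le> ft 0 h0 x00"
      by (rule ft_first[OF m_pos x00K w(1) h0K])
    moreover have "mut 0 / 2 * (norm (h0 - w))\<^sup>2 \<ge> 0" using mut_pos[OF m_pos] by simp
    ultimately have 1: "ft 0 w x00 \<le> ft 0 h0 x00 - gradft 0 w x00 \<bullet> (h0 - w)" by linarith
    have "- (gradft 0 w x00 \<bullet> (h0 - w)) \<le> norm (gradft 0 w x00) * norm (h0 - w)"
      using Cauchy_Schwarz_ineq2[of "gradft 0 w x00" "h0 - w"] by linarith
    also have "\<dots> \<le> norm (gradft 0 w x00) * 1" using w by (intro mult_left_mono) (auto simp: norm_minus_commute)
    also have "\<dots> \<le> norm (gradft 0 h0 x00) + Lt 0"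
    proof -
      have "dist (gradft 0 w x00) (gradft 0 h0 x00) \<le> Lt 0 * dist w h0"
        by (rule lipschitz_onD[OF ft_lipschitz[OF m_pos x00K] w(1) h0K])
      also have "\<dots> \<le> Lt 0 * 1" using mult_left_mono[OF w(2) Lt0] by (simp add: dist_norm)
      finally have "norm (gradft 0 w x00 - gradft 0 h0 x00) \<le> Lt 0" by (simp add: dist_norm)
      thus ?thesis using norm_triangle_ineq2[of "gradft 0 w x00" "gradft 0 h0 x00"] by simp
    qed
    finally have 2: "ft 0 w x00 \<le> ft 0 h0 x00 + norm (gradft 0 h0 x00) + Lt 0" using 1 by linarith
    have "cv \<bullet> (w - x00) = cv \<bullet> (h0 - x00) + cv \<bullet> (w - h0)" by (simp add: inner_diff_right)
    moreover have "cv \<bullet> (w - h0) \<le> norm cv" 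
    proof -
      have "cv \<bullet> (w - h0) \<le> norm cv * norm (w - h0)" using Cauchy_Schwarz_ineq2[of cv "w - h0"] by linarith
      also have "\<dots> \<le> norm cv * 1" using mult_left_mono[OF w(2), of "norm cv"] by simp
      finally show ?thesis by simp
    qed
    ultimately have "a0 w \<le> a0 h0 + C0" using 2 unfolding a0_def C0_def by linarith
    thus ?thesis using h0min[OF w(1)] by linarith
  qed
  have Glb: "G z \<ge> G h0 - C0 - C0 * norm (z - h0)" if z: "z \<in> K" for z
  proof (cases "norm (z - h0) \<le> 1")
    case True thus ?thesis using near[OF z True] mult_nonneg_nonneg[OF C0 norm_ge_zero[of "z - h0"]] by linarith
  next
    case False
    define r where "r = norm (z - h0)"
    have r1: "r > 1" using False unfolding r_def by simp
    define w where "w = (1 - 1 / r) *\<^sub>R h0 + (1 / r) *\<^sub>R z"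
    have wK: "w \<in> K" unfolding w_def using r1 by (intro convexD[OF K_convex h0K z]) auto
    have wh: "w - h0 = (1 / r) *\<^sub>R (z - h0)" unfolding w_def by (simp add: algebra_simps)
    have nw: "norm (w - h0) = 1"
    proof -
      have "norm (w - h0) = (1 / r) * r" unfolding wh r_def by simp
      thus ?thesis using r1 by simp
    qed
    have Gw: "G w \<le> (1 - 1 / r) * G h0 + (1 / r) * G z"
      unfolding w_def by (rule convex_onD[OF G_convex]) (use r1 h0K z in auto)
    have "G h0 - C0 \<le> (1 - 1 / r) * G h0 + (1 / r) * G z" using near[OF wK] nw Gw by simp
    hence "r * (G h0 - C0) \<le> r * ((1 - 1 / r) * G h0 + (1 / r) * G z)" using r1 by simp
    hence "r * (G h0 - C0) \<le> (r - 1) * G h0 + G z" using r1 by (simp add: algebra_simps)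
    hence "G z \<ge> G h0 - r * C0" by (simp add: algebra_simps)
    thus ?thesis unfolding r_def using C0 by (simp add: mult.commute)
  qed
  define b where "b = C0 + norm (gF h0)"
  show ?thesis
  proof (rule bdd_belowI2)
    fix z assume z: "z \<in> K"
    define r where "r = norm (z - h0)"
    have "Fs h0 + gF h0 \<bullet> (z - h0) + mu / 2 * r\<^sup>2 \<le> Fs z" unfolding r_def by (rule F_first[OF h0K z])
    moreover have "gF h0 \<bullet> (z - h0) \<ge> - (norm (gF h0) * r)"
      using Cauchy_Schwarz_ineq2[of "gF h0" "z - h0"] unfolding r_def by linarith
    ultimately have "Fs z \<ge> Fs h0 - norm (gF h0) * r + mu / 2 * r\<^sup>2" by linarith
    moreover have "G z \<ge> G h0 - C0 - C0 * r" using Glb[OF z] unfolding r_def .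
    ultimately have "U z \<ge> Fs h0 + G h0 - C0 + (mu / 2 * r\<^sup>2 - b * r)" unfolding U_eq b_def by (simp add: algebra_simps)
    moreover have "mu / 2 * r\<^sup>2 - b * r \<ge> - b\<^sup>2 / (2 * mu)" by (rule quad_lb[OF mu_pos])
    ultimately show "Fs h0 + G h0 - C0 - b\<^sup>2 / (2 * mu) \<le> U z" by linarith
  qed
qed

lemma Ustar_le: "z \<in> K \<Longrightarrow> Ustar \<le> U z"
  unfolding Ustar_def by (rule cInf_lower) (use bdd in auto)

lemma Ustar_approx: "e > 0 \<Longrightarrow> \<exists>p\<in>K. U p < Ustar + e"
proof -
  assume e: "e > 0"
  have "Inf (U ` K) < Ustar + e" unfolding Ustar_def using e by simp
  then obtain v where "v \<in> U ` K" "v < Ustar + e" using cInf_lessD[of "U ` K"] K_ne by blast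
  thus ?thesis by auto
qed

lemma mid: "p \<in> K \<Longrightarrow> q \<in> K \<Longrightarrow> mu / 8 * (norm (p - q))\<^sup>2 \<le> (U p + U q) / 2 - Ustar"
proof -
  assume p: "p \<in> K" and q: "q \<in> K"
  define z where "z = (1 - 1/2) *\<^sub>R p + (1/2::real) *\<^sub>R q"
  have zK: "z \<in> K" unfolding z_def by (rule convexD[OF K_convex p q]) auto
  have pz: "p - z = (1/2) *\<^sub>R (p - q)"
  proof -
    have "p = (1/2::real) *\<^sub>R p + (1/2::real) *\<^sub>R p" by (metis scaleR_half_double scaleR_add_right)
    then show ?thesis unfolding z_def by (simp add: algebra_simps)
  qed
  have qz: "q - z = - (1/2) *\<^sub>R (p - q)"
  proof -
    have "q = (1/2::real) *\<^sub>R q + (1/2::real) *\<^sub>R q" by (metis scaleR_half_double scaleR_add_right)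
    then show ?thesis unfolding z_def by (simp add: algebra_simps)
  qed
  have "Fs z + gF z \<bullet> (p - z) + mu / 2 * (norm (p - z))\<^sup>2 \<le> Fs p" by (rule F_first[OF zK p])
  moreover have "Fs z + gF z \<bullet> (q - z) + mu / 2 * (norm (q - z))\<^sup>2 \<le> Fs q" by (rule F_first[OF zK q])
  moreover have "gF z \<bullet> (p - z) + gF z \<bullet> (q - z) = 0" unfolding pz qz by (simp add: inner_minus_right)
  moreover have "(norm (p - z))\<^sup>2 = (norm (p - q))\<^sup>2 / 4" "(norm (q - z))\<^sup>2 = (norm (p - q))\<^sup>2 / 4"
    unfolding pz qz by (simp_all add: power2_eq_square)
  ultimately have F: "2 * Fs z + mu / 4 * (norm (p - q))\<^sup>2 \<le> Fs p + Fs q" by (simp add: algebra_simps)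
  have "G z \<le> (1 - 1/2) * G p + (1/2) * G q" unfolding z_def by (rule convex_onD[OF G_convex]) (use p q in auto)
  moreover have "Ustar \<le> U z" by (rule Ustar_le[OF zK])
  ultimately show ?thesis using F unfolding U_eq by (simp add: algebra_simps)
qed

definition "P k = (SOME p. p \<in> K \<and> U p < Ustar + inverse (real (Suc k)))"

lemma P: "P k \<in> K" "U (P k) < Ustar + inverse (real (Suc k))"
proof -
  have "\<exists>p. p \<in> K \<and> U p < Ustar + inverse (real (Suc k))" using Ustar_approx[of "inverse (real (Suc k))"] by auto
  hence "P k \<in> K \<and> U (P k) < Ustar + inverse (real (Suc k))" unfolding P_def by (rule someI_ex)
  thus "P k \<in> K" "U (P k) < Ustar + inverse (real (Suc k))" by auto
qed

lemma P_cauchy: "Cauchy P"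
proof (rule metric_CauchyI)
  fix e :: real assume e: "e > 0"
  obtain N where N: "inverse (real (Suc N)) < mu / 8 * e\<^sup>2" using reals_Archimedean[of "mu / 8 * e\<^sup>2"] e mu_pos by auto
  show "\<exists>M. \<forall>k\<ge>M. \<forall>l\<ge>M. dist (P k) (P l) < e"
  proof (intro exI allI impI)
    fix k l assume k: "k \<ge> N" and l: "l \<ge> N"
    have ik: "inverse (real (Suc k)) \<le> inverse (real (Suc N))" using k by (simp add: le_imp_inverse_le)
    have il: "inverse (real (Suc l)) \<le> inverse (real (Suc N))" using l by (simp add: le_imp_inverse_le)
    have "mu / 8 * (norm (P k - P l))\<^sup>2 \<le> (U (P k) + U (P l)) / 2 - Ustar" by (rule mid[OF P(1) P(1)])
    also have "\<dots> < (inverse (real (Suc k)) + inverse (real (Suc l))) / 2"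
    proof -
      define ik where "ik = inverse (real (Suc k))"
      define il where "il = inverse (real (Suc l))"
      have "U (P k) < Ustar + ik" "U (P l) < Ustar + il" using P(2)[of k] P(2)[of l] unfolding ik_def il_def by auto
      hence "(U (P k) + U (P l)) / 2 - Ustar < (ik + il) / 2" by (simp add: field_simps)
      thus ?thesis unfolding ik_def il_def .
    qed
    also have "\<dots> \<le> inverse (real (Suc N))"
    proof -
      define ik' where "ik' = inverse (real (Suc k))"
      define il' where "il' = inverse (real (Suc l))"
      define iN where "iN = inverse (real (Suc N))"
      have "ik' \<le> iN" "il' \<le> iN" using ik il unfolding ik'_def il'_def iN_def by auto
      hence "(ik' + il') / 2 \<le> iN" by (simp add: field_simps)
      thus ?thesis unfolding ik'_def il'_def iN_def .
    qed
    also have "\<dots> < mu / 8 * e\<^sup>2" by (rule N)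
    finally have "(norm (P k - P l))\<^sup>2 < e\<^sup>2" using mu_pos by simp
    hence "norm (P k - P l) < e" using e by (simp add: power_less_imp_less_base)
    thus "dist (P k) (P l) < e" by (simp add: dist_norm)
  qed
qed

definition "xb = lim P"

lemma P_lim: "P \<longlonglongrightarrow> xb"
  unfolding xb_def using P_cauchy by (simp add: Cauchy_convergent_iff convergent_LIMSEQ_iff)

lemma xbK: "xb \<in> K"
  using closed_sequentially[OF K_closed _ P_lim] P(1) by auto

lemma xbO: "xb \<in> Ob" using xbK K_sub_O by blast

lemma UP_lim: "(\<lambda>k. U (P k)) \<longlonglongrightarrow> Ustar"
proof (rule tendsto_sandwich[of "\<lambda>_. Ustar" _ _ "\<lambda>k. Ustar + inverse (real (Suc k))"])
  show "\<forall>\<^sub>F k in sequentially. Ustar \<le> U (P k)" using Ustar_le[OF P(1)] by simp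
  show "\<forall>\<^sub>F k in sequentially. U (P k) \<le> Ustar + inverse (real (Suc k))"
    by (rule always_eventually, rule allI, rule less_imp_le, rule P(2))
  show "(\<lambda>k. Ustar + inverse (real (Suc k))) \<longlonglongrightarrow> Ustar" by (rule LIMSEQ_inverse_real_of_nat_add)
qed simp

lemma cont_lim: "isCont g xb \<Longrightarrow> (\<lambda>k. g (P k)) \<longlonglongrightarrow> g xb"
  by (rule isCont_tendsto_compose[OF _ P_lim])

lemma Fs_lim: "(\<lambda>k. Fs (P k)) \<longlonglongrightarrow> Fs xb"
  by (rule cont_lim, rule has_derivative_continuous[OF dF[OF xbO]])

lemma gF_lim: "(\<lambda>k. gF (P k)) \<longlonglongrightarrow> gF xb"
  by (rule cont_lim, rule has_derivative_continuous[OF dgF[OF xbO]])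

definition "Gb = Ustar - Fs xb"

lemma GP_lim: "(\<lambda>k. G (P k)) \<longlonglongrightarrow> Gb"
proof -
  have "(\<lambda>k. U (P k) - Fs (P k)) \<longlonglongrightarrow> Ustar - Fs xb" by (intro tendsto_diff UP_lim Fs_lim)
  thus ?thesis unfolding Gb_def U_eq by simp
qed

end

context sonata begin

lemma VI: "z \<in> K \<Longrightarrow> 0 \<le> gF xb \<bullet> (z - xb) + G z - Gb"
proof -
  assume z: "z \<in> K"
  have step: "0 \<le> gF xb \<bullet> (z - xb) + G z - Gb + t * (Lmax * (norm (z - xb))\<^sup>2)" if t: "0 < t" "t \<le> 1" for t
  proof -
    have ineq: "- inverse (real (Suc k)) / t \<le> gF (P k) \<bullet> (z - P k) + G z - G (P k) + t * (Lmax * (norm (z - P k))\<^sup>2)" for k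
    proof -
      define p where "p = P k"
      have pK: "p \<in> K" unfolding p_def by (rule P(1))
      define zt where "zt = p + t *\<^sub>R (z - p)"
      have ztK: "zt \<in> K" unfolding zt_def using seg_in[OF K_convex z pK] t by simp
      have 1: "Ustar \<le> Fs zt + G zt" using Ustar_le[OF ztK] unfolding U_eq .
      have "Fs zt + gF zt \<bullet> (p - zt) + mu / 2 * (norm (p - zt))\<^sup>2 \<le> Fs p" by (rule F_first[OF ztK pK])
      moreover have "p - zt = - t *\<^sub>R (z - p)" unfolding zt_def by simp
      moreover have "mu / 2 * (norm (p - zt))\<^sup>2 \<ge> 0" using mu_pos by simp
      ultimately have 2: "Fs zt \<le> Fs p + t * (gF zt \<bullet> (z - p))" by (simp add: inner_minus_right)
      have "zt = (1 - t) *\<^sub>R p + t *\<^sub>R z" unfolding zt_def by (simp add: algebra_simps)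
      hence 3: "G zt \<le> (1 - t) * G p + t * G z" using convex_onD[OF G_convex, of t p z] t pK z by simp
      have "(gF zt - gF p) \<bullet> (z - p) \<le> norm (gF zt - gF p) * norm (z - p)"
        using Cauchy_Schwarz_ineq2[of "gF zt - gF p" "z - p"] by linarith
      also have "\<dots> \<le> (Lmax * norm (zt - p)) * norm (z - p)"
        by (intro mult_right_mono gF_lip ztK pK) auto
      also have "\<dots> = t * (Lmax * (norm (z - p))\<^sup>2)" unfolding zt_def using t by (simp add: power2_eq_square)
      finally have 4: "gF zt \<bullet> (z - p) \<le> gF p \<bullet> (z - p) + t * (Lmax * (norm (z - p))\<^sup>2)"
        by (simp add: inner_diff_left)
      have 5: "U p < Ustar + inverse (real (Suc k))" unfolding p_def by (rule P(2))
      define Q where "Q = gF p \<bullet> (z - p) + G z - G p + t * (Lmax * (norm (z - p))\<^sup>2)"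
      have "t * (gF zt \<bullet> (z - p)) \<le> t * (gF p \<bullet> (z - p) + t * (Lmax * (norm (z - p))\<^sup>2))"
        using 4 t by (intro mult_left_mono) auto
      hence "Ustar \<le> U p + t * Q" using 1 2 3 unfolding U_eq Q_def by (simp add: algebra_simps)
      hence "- inverse (real (Suc k)) < t * Q" using 5 by linarith
      hence "- inverse (real (Suc k)) / t < Q"
      proof -
        define ik where "ik = inverse (real (Suc k))"
        assume "- inverse (real (Suc k)) < t * Q"
        hence "- ik < Q * t" unfolding ik_def by (simp add: mult.commute)
        hence "- ik / t < Q" by (simp only: pos_divide_less_eq[OF t(1)])
        thus ?thesis unfolding ik_def .
      qed
      thus ?thesis unfolding Q_def p_def by simp
    qed
    have lim1: "(\<lambda>k. gF (P k) \<bullet> (z - P k) + G z - G (P k) + t * (Lmax * (norm (z - P k))\<^sup>2))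
        \<longlonglongrightarrow> gF xb \<bullet> (z - xb) + G z - Gb + t * (Lmax * (norm (z - xb))\<^sup>2)"
      by (intro tendsto_intros gF_lim P_lim GP_lim)
    have lim2: "(\<lambda>k. - inverse (real (Suc k)) / t) \<longlonglongrightarrow> 0"
      using tendsto_minus[OF tendsto_divide_zero[OF LIMSEQ_inverse_real_of_nat, of t]] by simp
    show ?thesis by (rule tendsto_le[OF trivial_limit_sequentially lim1 lim2]) (use ineq in auto)
  qed
  have "0 \<le> gF xb \<bullet> (z - xb) + G z - Gb"
  proof (rule le_eps[of "Lmax * (norm (z - xb))\<^sup>2"])
    show "0 \<le> Lmax * (norm (z - xb))\<^sup>2" using Lmax_nonneg by simp
    fix \<eta> :: real assume eta: "\<eta> > 0"
    define t where "t = min \<eta> 1"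
    have t: "0 < t" "t \<le> 1" "t \<le> \<eta>" using eta unfolding t_def by auto
    have "t * (Lmax * (norm (z - xb))\<^sup>2) \<le> \<eta> * (Lmax * (norm (z - xb))\<^sup>2)"
      using t Lmax_nonneg by (intro mult_right_mono) auto
    thus "0 \<le> gF xb \<bullet> (z - xb) + G z - Gb + \<eta> * (Lmax * (norm (z - xb))\<^sup>2)" using step[OF t(1,2)] by linarith
  qed
  thus ?thesis .
qed

definition "sfun n i z = ft i z (x n i) + (y n i - gradf i (x n i)) \<bullet> (z - x n i) + G z"

lemma quad_growth:
  assumes i: "i < m" and z: "z \<in> K"
  shows "sfun n i (xhat n i) + mut i / 2 * (norm (z - xhat n i))\<^sup>2 \<le> sfun n i z"
proof -
  define h where "h = xhat n i"
  define xi where "xi = x n i"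
  define cv where "cv = y n i - gradf i xi"
  have hK: "h \<in> K" and hmin: "\<And>z. z \<in> K \<Longrightarrow> sfun n i h \<le> sfun n i z"
    using xhat_def[OF i, of n] unfolding h_def sfun_def by auto
  have xiK: "xi \<in> K" unfolding xi_def by (rule xK[OF i])
  define r2 where "r2 = (norm (z - h))\<^sup>2"
  have step: "sfun n i h + mut i / 2 * r2 \<le> sfun n i z + t * (mut i / 2 * r2)" if t: "0 < t" "t \<le> 1" for t
  proof -
    define zt where "zt = (1 - t) *\<^sub>R h + t *\<^sub>R z"
    have ztK: "zt \<in> K" unfolding zt_def by (rule convexD[OF K_convex hK z]) (use t in auto)
    have f1: "ft i zt xi \<le> (1 - t) * ft i h xi + t * ft i z xi - mut i / 2 * t * (1 - t) * r2"
      using ft_strong[OF i xiK] hK z t unfolding strongly_convex_on_def zt_def r2_def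
      by (auto simp: norm_minus_commute)
    have f2: "cv \<bullet> (zt - xi) = (1 - t) * (cv \<bullet> (h - xi)) + t * (cv \<bullet> (z - xi))"
      unfolding zt_def by (simp add: inner_diff_right inner_add_right algebra_simps)
    have f3: "G zt \<le> (1 - t) * G h + t * G z" unfolding zt_def by (rule convex_onD[OF G_convex]) (use t hK z in auto)
    have "sfun n i h \<le> sfun n i zt" by (rule hmin[OF ztK])
    also have "\<dots> \<le> (1 - t) * sfun n i h + t * sfun n i z - mut i / 2 * t * (1 - t) * r2"
      using f1 f2 f3 unfolding sfun_def xi_def[symmetric] cv_def[symmetric] by (simp add: algebra_simps)
    finally have A: "sfun n i h \<le> (1 - t) * sfun n i h + t * sfun n i z - mut i / 2 * t * (1 - t) * r2" .
    define A where "A = mut i / 2 * r2"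
    have e1: "mut i / 2 * t * (1 - t) * r2 = t * A - t * (t * A)" unfolding A_def by (simp add: field_simps)
    have e2: "(1 - t) * sfun n i h = sfun n i h - t * sfun n i h" by (simp add: algebra_simps)
    have e3: "t * (sfun n i h + A) = t * sfun n i h + t * A" "t * (sfun n i z + t * A) = t * sfun n i z + t * (t * A)"
      by (simp_all add: algebra_simps)
    have "t * (sfun n i h + A) \<le> t * (sfun n i z + t * A)" using A e1 e2 e3 by linarith
    hence "t * (sfun n i h + mut i / 2 * r2) \<le> t * (sfun n i z + t * (mut i / 2 * r2))" unfolding A_def .
    thus ?thesis using t by simp
  qed
  have "sfun n i h + mut i / 2 * r2 \<le> sfun n i z"
  proof (rule le_eps[of "mut i / 2 * r2"])
    show "0 \<le> mut i / 2 * r2" using mut_pos[OF i] unfolding r2_def by simp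
    fix \<eta> :: real assume eta: "\<eta> > 0"
    define t where "t = min \<eta> 1"
    have t: "0 < t" "t \<le> 1" "t \<le> \<eta>" using eta unfolding t_def by auto
    have "t * (mut i / 2 * r2) \<le> \<eta> * (mut i / 2 * r2)"
      using t mut_pos[OF i] unfolding r2_def by (intro mult_right_mono) auto
    thus "sfun n i h + mut i / 2 * r2 \<le> sfun n i z + \<eta> * (mut i / 2 * r2)" using step[OF t(1,2)] by linarith
  qed
  thus ?thesis unfolding h_def r2_def .
qed

lemma quad_growth_xb:
  assumes i: "i < m"
  shows "sfun n i (xhat n i) + mut i / 2 * (norm (xb - xhat n i))\<^sup>2 \<le>
     ft i xb (x n i) + (y n i - gradf i (x n i)) \<bullet> (xb - x n i) + Gb"
proof -
  have xiO: "x n i \<in> Ob" using xK[OF i] K_sub_O by blast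
  have cft: "isCont (\<lambda>z. ft i z (x n i)) xb" by (rule has_derivative_continuous[OF ft_grad[OF i xbO xiO]])
  have lim1: "(\<lambda>k. ft i (P k) (x n i) + (y n i - gradf i (x n i)) \<bullet> (P k - x n i) + G (P k))
     \<longlonglongrightarrow> ft i xb (x n i) + (y n i - gradf i (x n i)) \<bullet> (xb - x n i) + Gb"
    by (intro tendsto_intros cont_lim[OF cft] P_lim GP_lim)
  have lim2: "(\<lambda>k. sfun n i (xhat n i) + mut i / 2 * (norm (P k - xhat n i))\<^sup>2)
     \<longlonglongrightarrow> sfun n i (xhat n i) + mut i / 2 * (norm (xb - xhat n i))\<^sup>2"
    by (intro tendsto_intros P_lim)
  show ?thesis
    by (rule tendsto_le[OF trivial_limit_sequentially lim1 lim2])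
       (use quad_growth[OF i P(1)] in \<open>auto simp: sfun_def\<close>)
qed

end

context sonata begin

lemma mumin_pos: "mumin > 0"
  unfolding mumin_def using mut_pos m_pos by (subst Min_gr_iff) auto

lemma mumin_le: "i < m \<Longrightarrow> mumin \<le> mut i" unfolding mumin_def by (rule Min_le) auto

lemma Dmax_nonneg: "Dmax \<ge> 0" using Dmax_ge[OF m_pos] by linarith

lemma e_bound: "i < m \<Longrightarrow> mu / 2 * (norm (x n i - xb))\<^sup>2 \<le> U (x n i) - Ustar"
proof -
  assume i: "i < m"
  have xiK: "x n i \<in> K" by (rule xK[OF i])
  have "Fs xb + gF xb \<bullet> (x n i - xb) + mu / 2 * (norm (x n i - xb))\<^sup>2 \<le> Fs (x n i)" by (rule F_first[OF xbK xiK])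
  moreover have "0 \<le> gF xb \<bullet> (x n i - xb) + G (x n i) - Gb" by (rule VI[OF xiK])
  ultimately show ?thesis unfolding U_eq Gb_def by linarith
qed

lemma per_i:
  assumes i: "i < m"
  shows "norm (xhat n i - x n i) \<le> (Dmax / mumin + 1) * norm (x n i - xb)
      + norm (y n i - (1 / real m) *\<^sub>R (\<Sum>j<m. phi n j *\<^sub>R y n j)) / mumin
      + Lmax / mumin * (norm (x n i - xb) + (\<Sum>j<m. norm (x n j - xb)) / real m)"
proof -
  define xi where "xi = x n i"
  define h where "h = xhat n i"
  define cv where "cv = y n i - gradf i xi"
  define R where "R = norm (h - xb)"
  define ei where "ei = norm (xi - xb)"
  define avg where "avg = (\<Sum>j<m. norm (x n j - xb)) / real m"
  define ybar where "ybar = (1 / real m) *\<^sub>R (\<Sum>j<m. phi n j *\<^sub>R y n j)"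
  define q where "q = norm (y n i - ybar)"
  have xiK: "xi \<in> K" unfolding xi_def by (rule xK[OF i])
  have hK: "h \<in> K" unfolding h_def using xhat_def[OF i, of n] by simp
  define w where "w = gradft i xb xi + cv - gF xb"
  have 1: "ft i h xi + cv \<bullet> (h - xi) + G h + mut i / 2 * R\<^sup>2 \<le> ft i xb xi + cv \<bullet> (xb - xi) + Gb"
    using quad_growth_xb[OF i, of n] unfolding sfun_def h_def[symmetric] xi_def[symmetric] cv_def[symmetric] R_def
    by (simp add: norm_minus_commute)
  have 2: "0 \<le> gF xb \<bullet> (h - xb) + G h - Gb" by (rule VI[OF hK])
  have 3: "ft i xb xi + gradft i xb xi \<bullet> (h - xb) + mut i / 2 * R\<^sup>2 \<le> ft i h xi"
    using ft_first[OF i xiK xbK hK] unfolding R_def .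
  have 4: "cv \<bullet> (h - xi) = cv \<bullet> (xb - xi) + cv \<bullet> (h - xb)" by (simp add: inner_diff_right)
  have 5: "w \<bullet> (h - xb) = gradft i xb xi \<bullet> (h - xb) + cv \<bullet> (h - xb) - gF xb \<bullet> (h - xb)"
    unfolding w_def by (simp add: inner_add_left inner_diff_left)
  have "mut i * R\<^sup>2 \<le> - (w \<bullet> (h - xb))" using 1 2 3 4 5 by linarith
  also have "\<dots> \<le> norm w * R" unfolding R_def using Cauchy_Schwarz_ineq2[of w "h - xb"] by linarith
  finally have "mut i * R * R \<le> norm w * R" by (simp add: power2_eq_square)
  hence wR: "mut i * R \<le> norm w"
    by (cases "R = 0") (use mut_pos[OF i] in \<open>auto simp: R_def\<close>)
  have Rb: "R \<le> norm w / mumin"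
  proof -
    have "mumin * R \<le> mut i * R" using mumin_le[OF i] by (intro mult_right_mono) (auto simp: R_def)
    hence "mumin * R \<le> norm w" using wR by linarith
    thus ?thesis using mumin_pos by (simp add: field_simps)
  qed
  have wdec: "w = ((gradft i xb xi - gF xb) - (gradft i xi xi - gF xi)) + (y n i - ybar) + (ybar - gF xi)"
    unfolding w_def cv_def using ft_consistent[OF i xiK] by (simp add: algebra_simps)
  have b1: "norm ((gradft i xb xi - gF xb) - (gradft i xi xi - gF xi)) \<le> Dmax * ei"
    using h_lip[OF i xiK xbK xiK] unfolding ei_def by (simp add: norm_minus_commute)
  have ybar_eq: "ybar = (1 / real m) *\<^sub>R (\<Sum>j<m. gradf j (x n j))" unfolding ybar_def tracking ..
  have "ybar - gF xi = (1 / real m) *\<^sub>R (\<Sum>j<m. gradf j (x n j) - gradf j xi)"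
    unfolding ybar_eq gF_def by (simp add: sum_subtractf scaleR_diff_right)
  hence "norm (ybar - gF xi) = (1 / real m) * norm (\<Sum>j<m. gradf j (x n j) - gradf j xi)" by simp
  also have "\<dots> \<le> (1 / real m) * (\<Sum>j<m. norm (gradf j (x n j) - gradf j xi))"
    by (intro mult_left_mono norm_sum) auto
  also have "\<dots> \<le> (1 / real m) * (\<Sum>j<m. Lmax * (norm (x n j - xb) + ei))"
  proof (intro mult_left_mono sum_mono)
    fix j assume "j \<in> {..<m}"
    hence j: "j < m" by simp
    have "norm (gradf j (x n j) - gradf j xi) \<le> Lmax * norm (x n j - xi)" by (rule gradf_lip[OF j xK[OF j] xiK])
    also have "\<dots> \<le> Lmax * (norm (x n j - xb) + ei)"
      using norm_triangle_ineq4[of "x n j - xb" "xi - xb"] Lmax_nonneg unfolding ei_def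
      by (intro mult_left_mono) (auto simp: algebra_simps norm_minus_commute)
    finally show "norm (gradf j (x n j) - gradf j xi) \<le> Lmax * (norm (x n j - xb) + ei)" .
  qed simp
  also have "\<dots> = Lmax * (avg + ei)"
    unfolding avg_def using m_pos by (simp add: sum.distrib sum_distrib_left[symmetric] field_simps)
  finally have b3: "norm (ybar - gF xi) \<le> Lmax * (avg + ei)" .
  have wb: "norm w \<le> Dmax * ei + q + Lmax * (avg + ei)"
  proof -
    have "norm w \<le> norm ((gradft i xb xi - gF xb) - (gradft i xi xi - gF xi)) + norm (y n i - ybar) + norm (ybar - gF xi)"
      unfolding wdec by (meson norm_triangle_le norm_triangle_ineq add_mono order_refl)
    thus ?thesis using b1 b3 unfolding q_def by linarith
  qed
  have "norm (h - xi) \<le> R + ei"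
    using norm_triangle_ineq[of "h - xb" "xb - xi"] unfolding R_def ei_def by (simp add: norm_minus_commute)
  also have "\<dots> \<le> norm w / mumin + ei" using Rb by simp
  also have "\<dots> \<le> (Dmax * ei + q + Lmax * (avg + ei)) / mumin + ei"
    using wb mumin_pos by (simp add: divide_right_mono)
  also have "\<dots> = (Dmax / mumin + 1) * ei + q / mumin + Lmax / mumin * (ei + avg)"
    using mumin_pos by (simp add: field_simps)
  finally show ?thesis unfolding h_def xi_def ei_def q_def ybar_def avg_def .
qed

end

lemma three_sq: "((a::real) + b + c)\<^sup>2 \<le> 3 * (a\<^sup>2 + b\<^sup>2 + c\<^sup>2)"
proof -
  have "0 \<le> (a - b)\<^sup>2 + (b - c)\<^sup>2 + (a - c)\<^sup>2" by simp
  thus ?thesis by (simp add: power2_eq_square algebra_simps)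
qed

lemma two_sq: "((a::real) + b)\<^sup>2 \<le> 2 * (a\<^sup>2 + b\<^sup>2)"
proof -
  have "0 \<le> (a - b)\<^sup>2" by simp
  thus ?thesis by (simp add: power2_eq_square algebra_simps)
qed

lemma final_alg:
  fixes d e q :: "nat \<Rightarrow> real" and A M Lq :: real and m :: nat
  assumes m: "m > 0" and A: "A \<ge> 0" and M: "M \<ge> 0" and Lq: "Lq \<ge> 0"
    and e: "\<And>i. i < m \<Longrightarrow> e i \<ge> 0" and q: "\<And>i. i < m \<Longrightarrow> q i \<ge> 0"
    and d0: "\<And>i. i < m \<Longrightarrow> d i \<ge> 0"
    and d: "\<And>i. i < m \<Longrightarrow> d i \<le> A * e i + M * q i + Lq * (e i + (\<Sum>j<m. e j) / real m)"
  shows "(\<Sum>i<m. (d i)\<^sup>2) \<le> 3 * (A\<^sup>2 + 4 * Lq\<^sup>2) * (\<Sum>i<m. (e i)\<^sup>2) + 3 * M\<^sup>2 * (\<Sum>i<m. (q i)\<^sup>2)"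
proof -
  define avg where "avg = (\<Sum>j<m. e j) / real m"
  have "(\<Sum>j<m. e j) \<ge> 0" using e by (intro sum_nonneg) auto
  hence avg0: "avg \<ge> 0" unfolding avg_def by simp
  have pt: "(d i)\<^sup>2 \<le> 3 * A\<^sup>2 * (e i)\<^sup>2 + 3 * M\<^sup>2 * (q i)\<^sup>2 + 3 * Lq\<^sup>2 * (2 * (e i)\<^sup>2 + 2 * avg\<^sup>2)" if i: "i < m" for i
  proof -
    have "(d i)\<^sup>2 \<le> (A * e i + M * q i + Lq * (e i + avg))\<^sup>2"
      using d[OF i] d0[OF i] unfolding avg_def by (intro power_mono) auto
    also have "\<dots> \<le> 3 * ((A * e i)\<^sup>2 + (M * q i)\<^sup>2 + (Lq * (e i + avg))\<^sup>2)" by (rule three_sq)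
    also have "(Lq * (e i + avg))\<^sup>2 \<le> Lq\<^sup>2 * (2 * ((e i)\<^sup>2 + avg\<^sup>2))"
      unfolding power_mult_distrib by (intro mult_left_mono two_sq) auto
    finally show ?thesis by (simp add: power_mult_distrib algebra_simps)
  qed
  have "(\<Sum>i<m. (d i)\<^sup>2) \<le> (\<Sum>i<m. 3 * A\<^sup>2 * (e i)\<^sup>2 + 3 * M\<^sup>2 * (q i)\<^sup>2 + 3 * Lq\<^sup>2 * (2 * (e i)\<^sup>2 + 2 * avg\<^sup>2))"
    by (rule sum_mono) (use pt in auto)
  also have "\<dots> = 3 * A\<^sup>2 * (\<Sum>i<m. (e i)\<^sup>2) + 3 * M\<^sup>2 * (\<Sum>i<m. (q i)\<^sup>2)
       + 3 * Lq\<^sup>2 * (2 * (\<Sum>i<m. (e i)\<^sup>2) + 2 * (real m * avg\<^sup>2))"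
  proof -
    have a: "(\<Sum>i<m. 3 * A\<^sup>2 * (e i)\<^sup>2) = 3 * A\<^sup>2 * (\<Sum>i<m. (e i)\<^sup>2)" by (simp add: sum_distrib_left)
    have b: "(\<Sum>i<m. 3 * M\<^sup>2 * (q i)\<^sup>2) = 3 * M\<^sup>2 * (\<Sum>i<m. (q i)\<^sup>2)" by (simp add: sum_distrib_left)
    have c: "(\<Sum>i<m. 3 * Lq\<^sup>2 * (2 * (e i)\<^sup>2 + 2 * avg\<^sup>2)) = 3 * Lq\<^sup>2 * (\<Sum>i<m. 2 * (e i)\<^sup>2 + 2 * avg\<^sup>2)"
      by (simp add: sum_distrib_left)
    have c2: "(\<Sum>i<m. 2 * (e i)\<^sup>2 + 2 * avg\<^sup>2) = 2 * (\<Sum>i<m. (e i)\<^sup>2) + 2 * (real m * avg\<^sup>2)"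
      by (simp add: sum.distrib sum_distrib_left)
    show ?thesis by (subst sum.distrib, subst sum.distrib, simp only: a b c c2)
  qed
  finally have S1: "(\<Sum>i<m. (d i)\<^sup>2) \<le> 3 * A\<^sup>2 * (\<Sum>i<m. (e i)\<^sup>2) + 3 * M\<^sup>2 * (\<Sum>i<m. (q i)\<^sup>2)
       + 3 * Lq\<^sup>2 * (2 * (\<Sum>i<m. (e i)\<^sup>2) + 2 * (real m * avg\<^sup>2))" .
  have mavg: "real m * avg\<^sup>2 \<le> (\<Sum>i<m. (e i)\<^sup>2)"
  proof -
    have "(\<Sum>j<m. e j)\<^sup>2 \<le> (\<Sum>i<m. (e i)\<^sup>2) * real m"
      using sum_squared_le_sum_of_squares[of e "{..<m}"] by simp
    hence h: "(\<Sum>j<m. e j)\<^sup>2 \<le> real m * (\<Sum>i<m. (e i)\<^sup>2)" by (simp add: mult.commute)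
    have "real m * avg\<^sup>2 = (\<Sum>j<m. e j)\<^sup>2 / real m" unfolding avg_def using m by (simp add: power2_eq_square)
    also have "\<dots> \<le> (\<Sum>i<m. (e i)\<^sup>2)" using h m by (simp add: divide_le_eq mult.commute)
    finally show ?thesis .
  qed
  have "3 * Lq\<^sup>2 * (2 * (\<Sum>i<m. (e i)\<^sup>2) + 2 * (real m * avg\<^sup>2)) \<le> 3 * Lq\<^sup>2 * (4 * (\<Sum>i<m. (e i)\<^sup>2))"
    using mavg by (intro mult_left_mono) auto
  moreover have "3 * (A\<^sup>2 + 4 * Lq\<^sup>2) * (\<Sum>i<m. (e i)\<^sup>2) = 3 * A\<^sup>2 * (\<Sum>i<m. (e i)\<^sup>2) + 3 * Lq\<^sup>2 * (4 * (\<Sum>i<m. (e i)\<^sup>2))"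
    by (simp add: algebra_simps)
  ultimately show ?thesis using S1 by linarith
qed

context sonata begin

lemma main:
  "(\<Sum>i<m. (norm (xhat n i - x n i))\<^sup>2)
     \<le> 6 / (mu * cl ^ (2 * (m - 1) * B)) * ((Dmax / mumin + 1)\<^sup>2 + 4 * Lmax\<^sup>2 / mumin\<^sup>2)
         * (\<Sum>i<m. phi n i * (U (x n i) - Ustar))
       + 3 / mumin\<^sup>2 * (\<Sum>i<m. (norm (y n i - (1 / real m) *\<^sub>R (\<Sum>j<m. phi n j *\<^sub>R y n j)))\<^sup>2)"
proof -
  define e where "e i = norm (x n i - xb)" for i
  define q where "q i = norm (y n i - (1 / real m) *\<^sub>R (\<Sum>j<m. phi n j *\<^sub>R y n j))" for i
  define A where "A = Dmax / mumin + 1"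
  define plb where "plb = cl ^ (2 * (m - 1) * B)"
  have plb: "plb > 0" unfolding plb_def using cl_pos by simp
  have A0: "A \<ge> 0" unfolding A_def using Dmax_nonneg mumin_pos by simp
  have fa: "(\<Sum>i<m. (norm (xhat n i - x n i))\<^sup>2) \<le> 3 * (A\<^sup>2 + 4 * (Lmax / mumin)\<^sup>2) * (\<Sum>i<m. (e i)\<^sup>2)
      + 3 * (1 / mumin)\<^sup>2 * (\<Sum>i<m. (q i)\<^sup>2)"
  proof (rule final_alg[OF m_pos A0])
    show "0 \<le> 1 / mumin" using mumin_pos by simp
    show "0 \<le> Lmax / mumin" using mumin_pos Lmax_nonneg by simp
    fix i assume i: "i < m"
    show "0 \<le> e i" "0 \<le> q i" "0 \<le> norm (xhat n i - x n i)" unfolding e_def q_def by auto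
    show "norm (xhat n i - x n i) \<le> A * e i + 1 / mumin * q i + Lmax / mumin * (e i + (\<Sum>j<m. e j) / real m)"
      using per_i[OF i, of n] unfolding A_def e_def q_def by simp
  qed
  have esum: "(\<Sum>i<m. (e i)\<^sup>2) \<le> 2 / (mu * plb) * (\<Sum>i<m. phi n i * (U (x n i) - Ustar))"
  proof -
    have "(\<Sum>i<m. (e i)\<^sup>2) \<le> (\<Sum>i<m. 2 / (mu * plb) * (phi n i * (U (x n i) - Ustar)))"
    proof (rule sum_mono)
      fix i assume "i \<in> {..<m}"
      hence i: "i < m" by simp
      have eb: "mu / 2 * (e i)\<^sup>2 \<le> U (x n i) - Ustar" unfolding e_def by (rule e_bound[OF i])
      have nn: "U (x n i) - Ustar \<ge> 0" using Ustar_le[OF xK[OF i]] by simp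
      have "(e i)\<^sup>2 \<le> 2 / mu * (U (x n i) - Ustar)" using eb mu_pos by (simp add: field_simps)
      also have "\<dots> \<le> 2 / mu * (phi n i / plb * (U (x n i) - Ustar))"
      proof -
        have "1 \<le> phi n i / plb" using phi_lb[OF i, of n] plb unfolding plb_def by simp
        hence "U (x n i) - Ustar \<le> phi n i / plb * (U (x n i) - Ustar)"
          using mult_right_mono[OF _ nn] by fastforce
        thus ?thesis using mu_pos by (intro mult_left_mono) auto
      qed
      also have "\<dots> = 2 / (mu * plb) * (phi n i * (U (x n i) - Ustar))" by (simp add: field_simps)
      finally show "(e i)\<^sup>2 \<le> 2 / (mu * plb) * (phi n i * (U (x n i) - Ustar))" .
    qed
    also have "\<dots> = 2 / (mu * plb) * (\<Sum>i<m. phi n i * (U (x n i) - Ustar))" by (simp add: sum_distrib_left)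
    finally show ?thesis .
  qed
  have C0: "3 * (A\<^sup>2 + 4 * (Lmax / mumin)\<^sup>2) \<ge> 0" by simp
  have "(\<Sum>i<m. (norm (xhat n i - x n i))\<^sup>2) \<le> 3 * (A\<^sup>2 + 4 * (Lmax / mumin)\<^sup>2) * (2 / (mu * plb) * (\<Sum>i<m. phi n i * (U (x n i) - Ustar)))
      + 3 * (1 / mumin)\<^sup>2 * (\<Sum>i<m. (q i)\<^sup>2)"
    using fa mult_left_mono[OF esum C0] by linarith
  also have "\<dots> = 6 / (mu * plb) * (A\<^sup>2 + 4 * Lmax\<^sup>2 / mumin\<^sup>2) * (\<Sum>i<m. phi n i * (U (x n i) - Ustar))
      + 3 / mumin\<^sup>2 * (\<Sum>i<m. (q i)\<^sup>2)"
    by (simp add: power_divide field_simps)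
  finally show ?thesis unfolding A_def plb_def q_def .
qed

end

theorem proposition4p3:
  fixes m :: nat
    and K Ob :: "'a::euclidean_space set"
    and f :: "nat \<Rightarrow> 'a \<Rightarrow> real" and gradf :: "nat \<Rightarrow> 'a \<Rightarrow> 'a" and Hf :: "nat \<Rightarrow> 'a \<Rightarrow> 'a \<Rightarrow> 'a"
    and G :: "'a \<Rightarrow> real"
    and mu L :: real and Li :: "nat \<Rightarrow> real"
    and ft :: "nat \<Rightarrow> 'a \<Rightarrow> 'a \<Rightarrow> real" and gradft :: "nat \<Rightarrow> 'a \<Rightarrow> 'a \<Rightarrow> 'a"
    and Hft :: "nat \<Rightarrow> 'a \<Rightarrow> 'a \<Rightarrow> 'a \<Rightarrow> 'a"
    and Lt mut Dl Du :: "nat \<Rightarrow> real"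
    and E :: "nat \<Rightarrow> (nat \<times> nat) set" and B :: nat
    and c :: "nat \<Rightarrow> nat \<Rightarrow> nat \<Rightarrow> real" and cl :: real
    and alpha :: real
    and x xhat y :: "nat \<Rightarrow> nat \<Rightarrow> 'a" and phi :: "nat \<Rightarrow> nat \<Rightarrow> real"
    and \<nu> :: nat
  defines "U \<equiv> (\<lambda>z. (\<Sum>i<m. f i z) / real m + G z)"
    and "HF \<equiv> (\<lambda>z v. (1 / real m) *\<^sub>R (\<Sum>i<m. Hf i z v))"
  assumes m_pos: "0 < m"
    \<comment> \<open>(A)\<close>
    and K_ne: "K \<noteq> {}" and K_closed: "closed K" and K_convex: "convex K"
    and O_open: "open Ob" and K_sub_O: "K \<subseteq> Ob"
    and f_grad: "\<And>i z. i < m \<Longrightarrow> z \<in> Ob \<Longrightarrow> (f i has_derivative (\<lambda>h. gradf i z \<bullet> h)) (at z)"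
    and f_hess: "\<And>i z. i < m \<Longrightarrow> z \<in> Ob \<Longrightarrow> (gradf i has_derivative Hf i z) (at z)"
    and f_convex: "\<And>i. i < m \<Longrightarrow> convex_on Ob (f i)"
    and mu_pos: "0 < mu"
    and HF_bounds: "\<And>z v. z \<in> K \<Longrightarrow> mu * (norm v)\<^sup>2 \<le> v \<bullet> HF z v \<and> v \<bullet> HF z v \<le> L * (norm v)\<^sup>2"
    and G_convex: "convex_on K G"
    and Hf_upper: "\<And>i z v. i < m \<Longrightarrow> z \<in> K \<Longrightarrow> v \<bullet> Hf i z v \<le> Li i * (norm v)\<^sup>2"
    \<comment> \<open>(B')\<close>
    and E_sub: "\<And>t. E t \<subseteq> {..<m} \<times> {..<m}"
    and B_pos: "0 < B"
    and B_conn: "\<And>n. strongly_connected_on m (\<Union>t\<in>{n * B ..< (Suc n) * B}. E t)"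
    \<comment> \<open>(E)\<close>
    and cl_pos: "0 < cl"
    and c_diag: "\<And>t i. i < m \<Longrightarrow> c t i i \<ge> cl"
    and c_edge: "\<And>t i j. i < m \<Longrightarrow> j < m \<Longrightarrow> (j, i) \<in> E t \<Longrightarrow> c t i j \<ge> cl"
    and c_zero: "\<And>t i j. i < m \<Longrightarrow> j < m \<Longrightarrow> i \<noteq> j \<Longrightarrow> (j, i) \<notin> E t \<Longrightarrow> c t i j = 0"
    and c_colstoch: "\<And>t j. j < m \<Longrightarrow> (\<Sum>i<m. c t i j) = 1"
    \<comment> \<open>(C)\<close>
    and ft_C2: "\<And>i. i < m \<Longrightarrow> C2_on (Ob \<times> Ob) (\<lambda>(u, w). ft i u w)"
    and ft_grad: "\<And>i u w. i < m \<Longrightarrow> u \<in> Ob \<Longrightarrow> w \<in> Ob \<Longrightarrow>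
                    ((\<lambda>z. ft i z w) has_derivative (\<lambda>h. gradft i u w \<bullet> h)) (at u)"
    and ft_hess: "\<And>i u w. i < m \<Longrightarrow> u \<in> Ob \<Longrightarrow> w \<in> Ob \<Longrightarrow>
                    ((\<lambda>z. gradft i z w) has_derivative Hft i u w) (at u)"
    and ft_consistent: "\<And>i z. i < m \<Longrightarrow> z \<in> K \<Longrightarrow> gradft i z z = gradf i z"
    and ft_lipschitz: "\<And>i w. i < m \<Longrightarrow> w \<in> K \<Longrightarrow> lipschitz_on (Lt i) K (\<lambda>z. gradft i z w)"
    and ft_strong: "\<And>i w. i < m \<Longrightarrow> w \<in> K \<Longrightarrow> strongly_convex_on K (mut i) (\<lambda>z. ft i z w)"
    and mut_pos: "\<And>i. i < m \<Longrightarrow> 0 < mut i"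
    and D_le: "\<And>i. i < m \<Longrightarrow> Dl i \<le> Du i"
    and D_bounds: "\<And>i u w v. i < m \<Longrightarrow> u \<in> K \<Longrightarrow> w \<in> K \<Longrightarrow>
                    Dl i * (norm v)\<^sup>2 \<le> v \<bullet> (Hft i u w v - HF u v) \<and>
                    v \<bullet> (Hft i u w v - HF u v) \<le> Du i * (norm v)\<^sup>2"
    \<comment> \<open>step-size\<close>
    and alpha_pos: "0 < alpha" and alpha_le1: "alpha \<le> 1"
    \<comment> \<open>SONATA iterates\<close>
    and x0: "\<And>i. i < m \<Longrightarrow> x 0 i \<in> K"
    and y0: "\<And>i. i < m \<Longrightarrow> y 0 i = gradf i (x 0 i)"
    and phi0: "\<And>i. i < m \<Longrightarrow> phi 0 i = 1"
    and xhat_def: "\<And>n i. i < m \<Longrightarrow> xhat n i \<in> K \<and>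
        (\<forall>z\<in>K. ft i (xhat n i) (x n i) + (y n i - gradf i (x n i)) \<bullet> (xhat n i - x n i) + G (xhat n i)
              \<le> ft i z (x n i) + (y n i - gradf i (x n i)) \<bullet> (z - x n i) + G z)"
    and phi_upd: "\<And>n i. i < m \<Longrightarrow> phi (Suc n) i = (\<Sum>j<m. c n i j * phi n j)"
    and x_upd: "\<And>n i. i < m \<Longrightarrow> x (Suc n) i =
        (1 / phi (Suc n) i) *\<^sub>R (\<Sum>j<m. (c n i j * phi n j) *\<^sub>R (x n j + alpha *\<^sub>R (xhat n j - x n j)))"
    and y_upd: "\<And>n i. i < m \<Longrightarrow> y (Suc n) i =
        (1 / phi (Suc n) i) *\<^sub>R (\<Sum>j<m. c n i j *\<^sub>R (phi n j *\<^sub>R y n j + gradf j (x (Suc n) j) - gradf j (x n j)))"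
  shows "(\<Sum>i<m. (norm (xhat \<nu> i - x \<nu> i))\<^sup>2)
     \<le> 6 / (mu * cl ^ (2 * (m - 1) * B)) *
         ((Max ((\<lambda>i. max \<bar>Dl i\<bar> \<bar>Du i\<bar>) ` {..<m}) / Min (mut ` {..<m}) + 1)\<^sup>2
          + 4 * (Max (Li ` {..<m}))\<^sup>2 / (Min (mut ` {..<m}))\<^sup>2)
         * (\<Sum>i<m. phi \<nu> i * (U (x \<nu> i) - Inf (U ` K)))
       + 3 / (Min (mut ` {..<m}))\<^sup>2 *
         (\<Sum>i<m. (norm (y \<nu> i - (1 / real m) *\<^sub>R (\<Sum>j<m. phi \<nu> j *\<^sub>R y \<nu> j)))\<^sup>2)"
proof -
  interpret s: sonata m K Ob f gradf Hf G mu L Li ft gradft Hft Lt mut Dl Du E B c cl alpha x xhat y phi U HF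
    by unfold_locales (fact U_def[THEN meta_eq_to_obj_eq] HF_def[THEN meta_eq_to_obj_eq] assms)+
  show ?thesis using s.main[of \<nu>] unfolding s.Dmax_def s.mumin_def s.Lmax_def s.Ustar_def .
qed

end
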